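(* Let $k,\Delta$ be positive integers, let $\varepsilon>0$, let $T$ be a finite tree, and let $G$ be a subgraph of $T\boxtimes K_k$ with maximum degree at most $\Delta$. Then there is a subdivision $\tilde G$ of $G$ with growth $f_{\tilde G}(r)\leq (k\Delta+\varepsilon)r+1$ for every positive integer $r$.
   Context: The growth of a finite graph $G$ is the function $f_G\colon\mathbb{N}\to\mathbb{N}$ where $f_G(r)$ is the maximum of $|V(H)|$ over all subgraphs $H$ of $G$ of radius at most $r$. $K_k$ is the complete graph on $k$ vertices. The strong product $G\boxtimes H$ has vertex set $V(G)\times V(H)$, with distinct vertices $(v,w),(v',w')$ adjacent iff ($vv'\in E(G)$ and $w=w'$), or ($v=v'$ and $ww'\in E(H)$), or ($vv'\in E(G)$ and $ww'\in E(H)$). A subdivision of $G$ is a graph obtained by replacing each edge $vw$ by a path with endpoints $v$ and $w$, internally disjoint from the rest of the graph. *)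

theory Defs
  imports Complex_Main
begin

type_synonym 'a ugraph = "'a set \<times> 'a set set"

definition verts :: "'a ugraph \<Rightarrow> 'a set" where "verts G = fst G"
definition edges :: "'a ugraph \<Rightarrow> 'a set set" where "edges G = snd G"

definition ugraph :: "'a ugraph \<Rightarrow> bool" where
  "ugraph G \<longleftrightarrow> finite (verts G) \<and>
     (\<forall>e\<in>edges G. \<exists>u v. e = {u, v} \<and> u \<noteq> v \<and> u \<in> verts G \<and> v \<in> verts G)"

definition subgraph :: "'a ugraph \<Rightarrow> 'a ugraph \<Rightarrow> bool" where
  "subgraph H G \<longleftrightarrow> ugraph H \<and> verts H \<subseteq> verts G \<and> edges H \<subseteq> edges G"

definition walk :: "'a ugraph \<Rightarrow> 'a list \<Rightarrow> bool" where
  "walk G xs \<longleftrightarrow> xs \<noteq> [] \<and> set xs \<subseteq> verts G \<and>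
     (\<forall>i. Suc i < length xs \<longrightarrow> {xs ! i, xs ! Suc i} \<in> edges G)"

definition path :: "'a ugraph \<Rightarrow> 'a list \<Rightarrow> bool" where
  "path G xs \<longleftrightarrow> walk G xs \<and> distinct xs"

definition path_edges :: "'a list \<Rightarrow> 'a set set" where
  "path_edges xs = {{xs ! i, xs ! Suc i} | i. Suc i < length xs}"

definition connected_graph :: "'a ugraph \<Rightarrow> bool" where
  "connected_graph G \<longleftrightarrow> verts G \<noteq> {} \<and>
     (\<forall>u\<in>verts G. \<forall>v\<in>verts G. \<exists>xs. walk G xs \<and> hd xs = u \<and> last xs = v)"

definition has_cycle :: "'a ugraph \<Rightarrow> bool" where
  "has_cycle G \<longleftrightarrow> (\<exists>xs. path G xs \<and> length xs \<ge> 3 \<and> {last xs, hd xs} \<in> edges G)"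

definition tree :: "'a ugraph \<Rightarrow> bool" where
  "tree T \<longleftrightarrow> ugraph T \<and> connected_graph T \<and> \<not> has_cycle T"

definition max_degree_le :: "'a ugraph \<Rightarrow> nat \<Rightarrow> bool" where
  "max_degree_le G d \<longleftrightarrow> (\<forall>v\<in>verts G. card {e\<in>edges G. v \<in> e} \<le> d)"

text \<open>Distance at most r: a walk with at most r edges.\<close>
definition dist_le :: "'a ugraph \<Rightarrow> 'a \<Rightarrow> 'a \<Rightarrow> nat \<Rightarrow> bool" where
  "dist_le G u v r \<longleftrightarrow> (\<exists>xs. walk G xs \<and> hd xs = u \<and> last xs = v \<and> length xs \<le> Suc r)"

definition radius_le :: "'a ugraph \<Rightarrow> nat \<Rightarrow> bool" where
  "radius_le G r \<longleftrightarrow> (\<exists>c\<in>verts G. \<forall>v\<in>verts G. dist_le G c v r)"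

definition growth :: "'a ugraph \<Rightarrow> nat \<Rightarrow> nat" where
  "growth G r = Max ({card (verts H) | H. subgraph H G \<and> radius_le H r} \<union> {0})"

definition complete_graph :: "nat \<Rightarrow> nat ugraph" where
  "complete_graph k = ({0..<k}, {{i, j} | i j. i < k \<and> j < k \<and> i \<noteq> j})"

definition strong_product :: "'a ugraph \<Rightarrow> 'b ugraph \<Rightarrow> ('a \<times> 'b) ugraph" where
  "strong_product G H = (verts G \<times> verts H,
     {{(v, w), (v', w')} | v w v' w'. v \<in> verts G \<and> v' \<in> verts G \<and> w \<in> verts H \<and> w' \<in> verts H \<and>
        (v, w) \<noteq> (v', w') \<and>
        ((v = v' \<or> {v, v'} \<in> edges G) \<and> (w = w' \<or> {w, w'} \<in> edges H))})"

definition subdivision :: "'b ugraph \<Rightarrow> 'a ugraph \<Rightarrow> ('a \<Rightarrow> 'b) \<Rightarrow> bool" where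
  "subdivision H G \<phi> \<longleftrightarrow> ugraph H \<and> inj_on \<phi> (verts G) \<and>
     (\<exists>P :: 'a set \<Rightarrow> 'b list.
        (\<forall>e\<in>edges G. \<exists>u v. e = {u, v} \<and> path H (P e) \<and> hd (P e) = \<phi> u \<and> last (P e) = \<phi> v) \<and>
        (\<forall>e\<in>edges G. (set (P e) - {hd (P e), last (P e)}) \<inter> \<phi> ` verts G = {}) \<and>
        (\<forall>e\<in>edges G. \<forall>e'\<in>edges G. e \<noteq> e' \<longrightarrow>
             (set (P e) - {hd (P e), last (P e)}) \<inter> set (P e') = {}) \<and>
        verts H = \<phi> ` verts G \<union> (\<Union>e\<in>edges G. set (P e)) \<and>
        edges H = (\<Union>e\<in>edges G. path_edges (P e)))"

end

theory Submission
  imports Defs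
begin

lemma walk_single: "walk G [x] \<longleftrightarrow> x \<in> verts G"
  by (simp add: walk_def)

lemma walk_Cons2: "walk G (x # y # xs) \<longleftrightarrow> x \<in> verts G \<and> {x,y} \<in> edges G \<and> walk G (y # xs)"
proof
  assume w: "walk G (x # y # xs)"
  have "{x,y} \<in> edges G" using w unfolding walk_def by (metis One_nat_def Suc_less_eq length_Cons nth_Cons_0 nth_Cons_Suc zero_less_Suc)
  moreover have "walk G (y # xs)" unfolding walk_def
  proof (intro conjI allI impI)
    show "set (y # xs) \<subseteq> verts G" using w by (simp add: walk_def)
    fix i assume "Suc i < length (y # xs)"
    then have "Suc (Suc i) < length (x # y # xs)" by simp
    then have "{(x # y # xs) ! Suc i, (x # y # xs) ! Suc (Suc i)} \<in> edges G" using w unfolding walk_def by blast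
    then show "{(y # xs) ! i, (y # xs) ! Suc i} \<in> edges G" by simp
  qed simp
  ultimately show "x \<in> verts G \<and> {x,y} \<in> edges G \<and> walk G (y # xs)" using w by (simp add: walk_def)
next
  assume a: "x \<in> verts G \<and> {x,y} \<in> edges G \<and> walk G (y # xs)"
  show "walk G (x # y # xs)" unfolding walk_def
  proof (intro conjI allI impI)
    show "set (x # y # xs) \<subseteq> verts G" using a by (simp add: walk_def)
    fix i assume i: "Suc i < length (x # y # xs)"
    show "{(x # y # xs) ! i, (x # y # xs) ! Suc i} \<in> edges G"
    proof (cases i)
      case 0 then show ?thesis using a by simp
    next
      case (Suc j)
      then have "Suc j < length (y # xs)" using i by simp
      then have "{(y # xs) ! j, (y # xs) ! Suc j} \<in> edges G" using a unfolding walk_def by blast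
      then show ?thesis using Suc by simp
    qed
  qed simp
qed

lemma walk_nonempty: "walk G xs \<Longrightarrow> xs \<noteq> []" by (simp add: walk_def)

lemma walk_append:
  assumes "xs \<noteq> []" "ys \<noteq> []"
  shows "walk G (xs @ ys) \<longleftrightarrow> walk G xs \<and> walk G ys \<and> {last xs, hd ys} \<in> edges G"
  using assms
proof (induction xs rule: induct_list012)
  case 1 then show ?case by simp
next
  case (2 x)
  then obtain y ys' where "ys = y # ys'" by (cases ys) auto
  then show ?case by (auto simp: walk_Cons2 walk_single)
next
  case (3 x y zs)
  then show ?case by (auto simp: walk_Cons2 walk_single)
qed

lemma edge_sym: "{a,b} = {b,a}" by blast

lemma walk_rev: "walk G xs \<Longrightarrow> walk G (rev xs)"
proof (induction xs rule: induct_list012)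
  case 1 then show ?case by (simp add: walk_def)
next
  case (2 x) then show ?case by simp
next
  case (3 x y zs)
  then have w: "walk G (y # zs)" "{x,y} \<in> edges G" "x \<in> verts G" by (auto simp: walk_Cons2)
  have "rev (x # y # zs) = rev (y # zs) @ [x]" by simp
  moreover have "walk G (rev (y # zs) @ [x])"
    using 3(2)[OF w(1)] w by (subst walk_append) (auto simp: walk_single insert_commute)
  ultimately show ?case by simp
qed

lemma walk_to_path:
  assumes "walk G xs"
  shows "\<exists>ys. path G ys \<and> hd ys = hd xs \<and> last ys = last xs \<and> set ys \<subseteq> set xs"
  using assms
proof (induction "length xs" arbitrary: xs rule: less_induct)
  case less
  show ?case
  proof (cases "distinct xs")
    case True then show ?thesis using less.prems by (auto simp: path_def)
  next
    case False
    then obtain as y bs cs where xs: "xs = as @ [y] @ bs @ [y] @ cs" using not_distinct_decomp by blast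
    have w1: "walk G (as @ [y])" and w2: "walk G ([y] @ cs)"
    proof -
      have "walk G ((as @ [y] @ bs) @ ([y] @ cs))" using less.prems xs by simp
      then have a: "walk G (as @ [y] @ bs)" "walk G ([y] @ cs)" by (subst (asm) walk_append; simp)+
      from a(1) have aa: "walk G ((as @ [y]) @ bs) " by simp
      show "walk G (as @ [y])"
      proof (cases "bs = []")
        case True then show ?thesis using aa by simp
      next
        case False then show ?thesis using aa walk_append[of "as @ [y]" bs G] by blast
      qed
      show "walk G ([y] @ cs)" using a(2) .
    qed
    define xs' where "xs' = as @ [y] @ cs"
    have "walk G xs'"
    proof (cases "cs = []")
      case True then show ?thesis using w1 by (simp add: xs'_def)
    next
      case False
      have "walk G (as @ [y])" using w1 .
      moreover have "walk G ([y] @ cs)" using w2 .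
      moreover have "walk G ((as @ [y]) @ cs)"
        using w1 w2 False by (subst walk_append) (auto simp: walk_append walk_Cons2 neq_Nil_conv)
      ultimately show ?thesis by (simp add: xs'_def)
    qed
    moreover have "length xs' < length xs" using xs xs'_def by simp
    ultimately obtain ys where ys: "path G ys" "hd ys = hd xs'" "last ys = last xs'" "set ys \<subseteq> set xs'"
      using less.hyps by blast
    have "hd xs' = hd xs" using xs xs'_def by (cases as) auto
    moreover have "last xs' = last xs" using xs xs'_def by (cases cs) auto
    moreover have "set xs' \<subseteq> set xs" using xs xs'_def by auto
    ultimately show ?thesis using ys by auto
  qed
qed

lemma walk_join:
  assumes "walk G xs" "walk G ys" "last xs = hd ys"
  shows "walk G (xs @ tl ys)"
proof (cases "tl ys = []")
  case True then show ?thesis using assms by simp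
next
  case False
  then obtain y z zs where ys: "ys = y # z # zs" using assms(2) by (cases ys; cases "tl ys") (auto simp: walk_def)
  then have "{y,z} \<in> edges G" "walk G (z # zs)" using assms(2) by (auto simp: walk_Cons2)
  then show ?thesis using assms ys walk_append[of xs "z # zs" G] by (auto simp: walk_def)
qed

lemma walk_set: "walk G xs \<Longrightarrow> set xs \<subseteq> verts G" by (simp add: walk_def)

definition reachR :: "'a ugraph \<Rightarrow> 'a set \<Rightarrow> 'a \<Rightarrow> 'a \<Rightarrow> bool" where
  "reachR T R a b \<longleftrightarrow> (\<exists>xs. walk T xs \<and> set xs \<subseteq> R \<and> hd xs = a \<and> last xs = b)"

definition rho :: "'a ugraph \<Rightarrow> 'a set \<Rightarrow> 'a \<Rightarrow> 'a" where
  "rho T R a = (THE p. p \<in> verts T - R \<and> (\<exists>b. reachR T R a b \<and> {b,p} \<in> edges T))"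

lemma unique_attach:
  assumes tr: "tree T"
    and Pc: "\<forall>p\<in>verts T - R. \<forall>p'\<in>verts T - R. \<exists>xs. walk T xs \<and> set xs \<subseteq> verts T - R \<and> hd xs = p \<and> last xs = p'"
    and r: "reachR T R a b'" and e1: "{b',p'} \<in> edges T" and p1: "p' \<in> verts T - R"
    and e2: "{a,p} \<in> edges T" and p2: "p \<in> verts T - R"
  shows "p' = p"
proof (rule ccontr)
  assume ne: "p' \<noteq> p"
  obtain xs where xs: "walk T xs" "set xs \<subseteq> R" "hd xs = a" "last xs = b'" using r reachR_def by metis
  have "walk T (rev xs)" using walk_rev xs by blast
  then obtain pi1 where pi1: "path T pi1" "hd pi1 = b'" "last pi1 = a" "set pi1 \<subseteq> R"
    using walk_to_path[of T "rev xs"] xs walk_nonempty[OF xs(1)]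
    by (metis hd_rev last_rev set_rev subset_trans)
  obtain ys where ys: "walk T ys" "set ys \<subseteq> verts T - R" "hd ys = p" "last ys = p'" using Pc p1 p2 by blast
  then obtain pi2 where pi2: "path T pi2" "hd pi2 = p" "last pi2 = p'" "set pi2 \<subseteq> verts T - R"
    using walk_to_path[of T ys] by blast
  have n1: "pi1 \<noteq> []" and n2: "pi2 \<noteq> []" using pi1 pi2 by (auto simp: path_def walk_def)
  obtain z zs where z: "pi2 = z # zs" using n2 by (cases pi2) auto
  have "zs \<noteq> []" using z pi2 ne by auto
  then have l2: "length pi2 \<ge> 2" using z by (cases zs) auto
  define cyc where "cyc = pi1 @ pi2"
  have "walk T cyc" unfolding cyc_def using pi1 pi2 n1 n2 e2
    by (subst walk_append) (auto simp: path_def insert_commute)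
  moreover have "distinct cyc" unfolding cyc_def using pi1 pi2 by (auto simp: path_def)
  moreover have "length cyc \<ge> 3" unfolding cyc_def using l2 n1 by (cases pi1) auto
  moreover have "{last cyc, hd cyc} \<in> edges T" unfolding cyc_def using n1 n2 pi1 pi2 e1
    by (auto simp: insert_commute)
  ultimately have "has_cycle T" unfolding has_cycle_def path_def by blast
  then show False using tr tree_def by blast
qed

lemma rho_ii:
  assumes tr: "tree T"
    and Pc: "\<forall>p\<in>verts T - R. \<forall>p'\<in>verts T - R. \<exists>xs. walk T xs \<and> set xs \<subseteq> verts T - R \<and> hd xs = p \<and> last xs = p'"
    and a: "a \<in> R" "a \<in> verts T" and e: "{a,p} \<in> edges T" and p: "p \<in> verts T - R"
  shows "rho T R a = p"
  unfolding rho_def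
proof (rule the_equality)
  have "reachR T R a a" unfolding reachR_def using a by (intro exI[of _ "[a]"]) (simp add: walk_single)
  then show "p \<in> verts T - R \<and> (\<exists>b. reachR T R a b \<and> {b,p} \<in> edges T)" using e p by blast
next
  fix p' assume "p' \<in> verts T - R \<and> (\<exists>b. reachR T R a b \<and> {b,p'} \<in> edges T)"
  then show "p' = p" using unique_attach[OF tr Pc _ _ _ e p] by blast
qed

lemma reachR_step:
  assumes "reachR T R b w" "a \<in> R" "a \<in> verts T" "{a,b} \<in> edges T"
  shows "reachR T R a w"
proof -
  obtain xs where xs: "walk T xs" "set xs \<subseteq> R" "hd xs = b" "last xs = w" using assms(1) reachR_def by metis
  then obtain ys where "xs = b # ys" by (cases xs) (auto simp: walk_def)
  then show ?thesis unfolding reachR_def using xs assms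
    by (intro exI[of _ "a # xs"]) (auto simp: walk_Cons2)
qed

lemma rho_i:
  assumes "a \<in> R" "b \<in> R" "a \<in> verts T" "b \<in> verts T" "{a,b} \<in> edges T"
  shows "rho T R a = rho T R b"
proof -
  have "reachR T R a w \<longleftrightarrow> reachR T R b w" for w
    using reachR_step[of T R b w a] reachR_step[of T R a w b] assms by (auto simp: insert_commute)
  then show ?thesis unfolding rho_def by simp
qed

lemma root_walk:
  assumes st: "\<forall>a\<in>verts T. a \<noteq> r0 \<longrightarrow> (\<exists>b\<in>verts T. {a,b} \<in> edges T \<and> (f b::nat) < f a \<and> (key a::nat) < key b)"
    and r0: "r0 \<in> verts T"
  shows "a \<in> verts T \<Longrightarrow> \<exists>xs. walk T xs \<and> hd xs = a \<and> last xs = r0 \<and> (\<forall>y\<in>set xs. key a \<le> key y)"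
proof (induction "f a" arbitrary: a rule: less_induct)
  case less
  show ?case
  proof (cases "a = r0")
    case True then show ?thesis using r0 by (intro exI[of _ "[r0]"]) (auto simp: walk_single)
  next
    case False
    then obtain b where b: "b \<in> verts T" "{a,b} \<in> edges T" "f b < f a" "key a < key b" using st less.prems by blast
    then obtain xs where xs: "walk T xs" "hd xs = b" "last xs = r0" "\<forall>y\<in>set xs. key b \<le> key y" using less.hyps by blast
    then obtain ys where "xs = b # ys" by (cases xs) (auto simp: walk_def)
    moreover have "\<forall>y\<in>set (a # xs). key a \<le> key y" using xs(4) b(4) by (auto intro: order.trans[of _ "key b"])
    ultimately show ?thesis using xs b less.prems
      by (intro exI[of _ "a # xs"]) (simp add: walk_Cons2)
  qed
qed

lemma P_connected:
  assumes st: "\<forall>a\<in>verts T. a \<noteq> r0 \<longrightarrow> (\<exists>b\<in>verts T. {a,b} \<in> edges T \<and> (f b::nat) < f a \<and> (key a::nat) < key b)"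
    and r0: "r0 \<in> verts T"
  shows "\<forall>p\<in>verts T - {a. key a < \<kappa>}. \<forall>p'\<in>verts T - {a. key a < \<kappa>}. \<exists>xs. walk T xs \<and> set xs \<subseteq> verts T - {a. key a < \<kappa>} \<and> hd xs = p \<and> last xs = p'"
proof (intro ballI)
  fix p p' assume p: "p \<in> verts T - {a. key a < \<kappa>}" and p': "p' \<in> verts T - {a. key a < \<kappa>}"
  obtain xs where xs: "walk T xs" "hd xs = p" "last xs = r0" "\<forall>y\<in>set xs. key p \<le> key y"
    using root_walk[OF st r0] p by blast
  obtain ys where ys: "walk T ys" "hd ys = p'" "last ys = r0" "\<forall>y\<in>set ys. key p' \<le> key y"
    using root_walk[OF st r0] p' by blast
  have w: "walk T (xs @ tl (rev ys))" using walk_join[OF xs(1) walk_rev[OF ys(1)]] xs ys walk_nonempty[OF ys(1)]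
    by (simp add: hd_rev)
  have "set (tl (rev ys)) \<subseteq> set (rev ys)" by (cases "rev ys") auto
  then have "set (xs @ tl (rev ys)) \<subseteq> set xs \<union> set ys" by auto
  moreover have "set xs \<union> set ys \<subseteq> verts T - {a. key a < \<kappa>}"
  proof -
    have "\<forall>y\<in>set xs. \<kappa> \<le> key y" using xs(4) p by (auto intro: order.trans)
    moreover have "\<forall>y\<in>set ys. \<kappa> \<le> key y" using ys(4) p' by (auto intro: order.trans)
    ultimately show ?thesis using walk_set[OF xs(1)] walk_set[OF ys(1)] by (auto simp: not_less)
  qed
  moreover have "hd (xs @ tl (rev ys)) = p" using xs walk_nonempty[OF xs(1)] by simp
  moreover have "last (xs @ tl (rev ys)) = p'"
  proof (cases "tl (rev ys) = []")
    case True
    then have "rev ys = [hd (rev ys)]" using walk_nonempty[OF ys(1)] by (cases "rev ys") auto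
    then have "ys = [p']" using ys(2) walk_nonempty[OF ys(1)] by (metis hd_rev last_ConsL rev_singleton_conv)
    then show ?thesis using xs ys by simp
  next
    case False
    then show ?thesis using ys walk_nonempty[OF ys(1)] by (simp add: last_tl last_rev)
  qed
  ultimately show "\<exists>zs. walk T zs \<and> set zs \<subseteq> verts T - {a. key a < \<kappa>} \<and> hd zs = p \<and> last zs = p'"
    using w by blast
qed

lemma walk_mono: "walk G1 xs \<Longrightarrow> verts G1 \<subseteq> verts G2 \<Longrightarrow> edges G1 \<subseteq> edges G2 \<Longrightarrow> walk G2 xs"
  unfolding walk_def by blast

locale sd =
  fixes G :: "'v ugraph" and L :: "'v set \<Rightarrow> nat" and eid :: "'v set \<Rightarrow> nat" and m :: nat
  assumes ug: "ugraph G" and Lpos: "\<And>e. e \<in> edges G \<Longrightarrow> 1 \<le> L e"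
    and eid_inj: "inj_on eid (edges G)" and eid_lt: "\<And>e. e \<in> edges G \<Longrightarrow> eid e < m"
begin

definition ex :: "'v set \<Rightarrow> 'v" where "ex e = (SOME x. \<exists>y. e = {x,y} \<and> x \<noteq> y)"
definition ey :: "'v set \<Rightarrow> 'v" where "ey e = (SOME y. e = {ex e, y} \<and> ex e \<noteq> y)"
definition pv :: "'v set \<Rightarrow> nat \<Rightarrow> 'v + nat" where
  "pv e j = (if j = 0 then Inl (ex e) else if L e \<le> j then Inl (ey e) else Inr (j * m + eid e))"
definition Pth :: "'v set \<Rightarrow> ('v + nat) list" where "Pth e = map (pv e) [0..<Suc (L e)]"
definition H :: "('v + nat) ugraph" where
  "H = (Inl ` verts G \<union> (\<Union>e\<in>edges G. set (Pth e)), \<Union>e\<in>edges G. path_edges (Pth e))"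
definition Lip :: "('v + nat \<Rightarrow> nat) \<Rightarrow> bool" where
  "Lip F \<longleftrightarrow> (\<forall>e\<in>edges G. \<forall>j<L e. F (pv e (Suc j)) \<le> F (pv e j) + 1 \<and> F (pv e j) \<le> F (pv e (Suc j)) + 1)"
definition dec :: "nat \<Rightarrow> 'v set" where "dec n = inv_into (edges G) eid (n mod m)"
definition mkpot :: "('v \<Rightarrow> nat) \<Rightarrow> ('v set \<Rightarrow> nat \<Rightarrow> nat) \<Rightarrow> 'v + nat \<Rightarrow> nat" where
  "mkpot fv \<phi> x = (case x of Inl v \<Rightarrow> fv v | Inr n \<Rightarrow> \<phi> (dec n) (n div m))"

lemma ex_ey:
  assumes "e \<in> edges G"
  shows "e = {ex e, ey e}" "ex e \<noteq> ey e" "ex e \<in> verts G" "ey e \<in> verts G"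
proof -
  obtain u v where uv: "e = {u,v}" "u \<noteq> v" "u \<in> verts G" "v \<in> verts G" using ug assms unfolding ugraph_def by blast
  have "\<exists>y. e = {ex e, y} \<and> ex e \<noteq> y" unfolding ex_def by (rule someI_ex) (use uv in blast)
  then have 1: "e = {ex e, ey e} \<and> ex e \<noteq> ey e" unfolding ey_def by (rule someI_ex)
  then show "e = {ex e, ey e}" "ex e \<noteq> ey e" by auto
  have "ex e \<in> e" "ey e \<in> e" using 1 by auto
  then show "ex e \<in> verts G" "ey e \<in> verts G" using uv by auto
qed

lemma in_edge_iff: "e \<in> edges G \<Longrightarrow> z \<in> e \<longleftrightarrow> z = ex e \<or> z = ey e"
  using ex_ey(1)[of e] by auto

lemma finite_V: "finite (verts G)" using ug unfolding ugraph_def by (rule conjunct1)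

lemma finite_E: "finite (edges G)"
proof -
  have "edges G \<subseteq> Pow (verts G)"
  proof
    fix e assume "e \<in> edges G"
    then show "e \<in> Pow (verts G)" using ex_ey[of e] by (metis Pow_iff empty_subsetI insert_subset)
  qed
  then show ?thesis using finite_V finite_subset by blast
qed

lemma pv_0[simp]: "pv e 0 = Inl (ex e)" by (simp add: pv_def)
lemma pv_L[simp]: "e \<in> edges G \<Longrightarrow> pv e (L e) = Inl (ey e)" using Lpos[of e] by (simp add: pv_def)
lemma pv_int: "0 < j \<Longrightarrow> j < L e \<Longrightarrow> pv e j = Inr (j * m + eid e)" by (simp add: pv_def)

lemma pv_inj:
  assumes "e \<in> edges G" "e' \<in> edges G" "0 < j" "j < L e" "0 < j'" "j' < L e'" "pv e j = pv e' j'"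
  shows "e = e' \<and> j = j'"
proof -
  have eq: "j * m + eid e = j' * m + eid e'" using assms by (simp add: pv_int)
  have "(j * m + eid e) mod m = eid e" using eid_lt[OF assms(1)] by simp
  moreover have "(j' * m + eid e') mod m = eid e'" using eid_lt[OF assms(2)] by simp
  ultimately have "eid e = eid e'" using eq by simp
  then have "e = e'" using eid_inj assms(1,2) inj_on_eq_iff by metis
  moreover have "j = j'" using eq \<open>eid e = eid e'\<close> eid_lt[OF assms(1)] by simp
  ultimately show ?thesis by simp
qed

lemma H_verts: "verts H = Inl ` verts G \<union> (\<Union>e\<in>edges G. set (Pth e))"
  by (simp add: H_def verts_def)
lemma H_edges: "edges H = (\<Union>e\<in>edges G. path_edges (Pth e))"
  by (simp add: H_def edges_def)

lemma Pth_nth: "i \<le> L e \<Longrightarrow> Pth e ! i = pv e i"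
  unfolding Pth_def by (simp del: upt_Suc add: nth_map_upt less_Suc_eq_le)

lemma hd_Pth: "hd (Pth e) = pv e 0" by (simp del: upt_Suc add: Pth_def upt_conv_Cons)
lemma last_Pth: "last (Pth e) = pv e (L e)" by (simp add: Pth_def)

lemma length_Pth[simp]: "length (Pth e) = Suc (L e)" by (simp add: Pth_def)

lemma set_Pth: "set (Pth e) = pv e ` {..L e}"
  by (auto simp del: upt_Suc simp: Pth_def image_iff less_Suc_eq_le)

lemma path_edges_Pth: "path_edges (Pth e) = {{pv e j, pv e (Suc j)} | j. j < L e}"
proof -
  have *: "\<And>i. i < L e \<Longrightarrow> {Pth e ! i, Pth e ! Suc i} = {pv e i, pv e (Suc i)}" by (simp add: Pth_nth)
  show ?thesis unfolding path_edges_def length_Pth Suc_less_eq using * by blast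
qed

lemma edges_H: "x \<in> edges H \<Longrightarrow> \<exists>e\<in>edges G. \<exists>j<L e. x = {pv e j, pv e (Suc j)}"
  unfolding H_edges by (auto simp: path_edges_Pth)

lemma verts_H: "x \<in> verts H \<longleftrightarrow> x \<in> Inl ` verts G \<or> (\<exists>e\<in>edges G. \<exists>j. 0 < j \<and> j < L e \<and> x = pv e j)"
proof
  assume "x \<in> verts H"
  then consider "x \<in> Inl ` verts G" | e j where "e \<in> edges G" "j \<le> L e" "x = pv e j"
    unfolding H_verts by (auto simp: set_Pth)
  then show "x \<in> Inl ` verts G \<or> (\<exists>e\<in>edges G. \<exists>j. 0 < j \<and> j < L e \<and> x = pv e j)"
  proof cases
    case 2
    show ?thesis
    proof (cases "j = 0 \<or> j = L e")
      case True then show ?thesis using 2 ex_ey[OF 2(1)] by auto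
    next
      case False then show ?thesis using 2 by (intro disjI2 bexI[of _ e] exI[of _ j]) auto
    qed
  qed simp
next
  assume "x \<in> Inl ` verts G \<or> (\<exists>e\<in>edges G. \<exists>j. 0 < j \<and> j < L e \<and> x = pv e j)"
  then show "x \<in> verts H"
  proof (elim disjE)
    assume "\<exists>e\<in>edges G. \<exists>j. 0 < j \<and> j < L e \<and> x = pv e j"
    then obtain e j where e: "e \<in> edges G" "j < L e" "x = pv e j" by blast
    then have "x \<in> pv e ` {..L e}" by auto
    then show ?thesis unfolding H_verts set_Pth using e by blast
  qed (simp add: H_verts)
qed

lemma finite_H: "finite (verts H)"
  unfolding H_verts using finite_V finite_E by simp

lemma pv_in_H: "e \<in> edges G \<Longrightarrow> j \<le> L e \<Longrightarrow> pv e j \<in> verts H"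
  unfolding H_verts by (auto simp: set_Pth)

lemma edge_H: "e \<in> edges G \<Longrightarrow> j < L e \<Longrightarrow> {pv e j, pv e (Suc j)} \<in> edges H"
  unfolding H_edges by (auto simp: path_edges_Pth)

lemma Pth_walk: "e \<in> edges G \<Longrightarrow> walk H (Pth e)"
proof -
  assume e: "e \<in> edges G"
  have "Pth e \<noteq> []" by (metis length_Pth list.size(3) nat.distinct(1))
  moreover have "set (Pth e) \<subseteq> verts H" using pv_in_H e by (auto simp: set_Pth)
  moreover have "\<forall>i. Suc i < length (Pth e) \<longrightarrow> {Pth e ! i, Pth e ! Suc i} \<in> edges H"
    using edge_H e by (auto simp: Pth_nth)
  ultimately show ?thesis unfolding walk_def by blast
qed

lemma Pth_distinct: "e \<in> edges G \<Longrightarrow> distinct (Pth e)"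
proof -
  assume e: "e \<in> edges G"
  have "inj_on (pv e) {0..<Suc (L e)}"
  proof (rule inj_onI)
    fix i j assume i: "i \<in> {0..<Suc (L e)}" and j: "j \<in> {0..<Suc (L e)}" and eq: "pv e i = pv e j"
    show "i = j"
    proof (cases "0 < i \<and> i < L e")
      case True
      then have "pv e i = Inr (i * m + eid e)" by (simp add: pv_int)
      then have "0 < j \<and> j < L e" using eq j e by (cases "j = 0"; cases "j = L e") auto
      then show ?thesis using pv_inj[OF e e] True eq by blast
    next
      case False
      then have "i = 0 \<or> i = L e" using i by auto
      moreover have "\<not> (0 < j \<and> j < L e)"
      proof
        assume "0 < j \<and> j < L e"
        then have "pv e j = Inr (j * m + eid e)" by (simp add: pv_int)
        then show False using eq \<open>i = 0 \<or> i = L e\<close> e by auto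
      qed
      then have "j = 0 \<or> j = L e" using j by auto
      ultimately show ?thesis using eq ex_ey(2)[OF e] e Lpos[OF e] by auto
    qed
  qed
  then show ?thesis unfolding Pth_def by (simp del: upt_Suc add: distinct_map)
qed

lemma int_Pth:
  assumes e: "e \<in> edges G"
  shows "set (Pth e) - {hd (Pth e), last (Pth e)} = pv e ` {0<..<L e}"
proof (intro equalityI subsetI)
  fix x assume "x \<in> set (Pth e) - {hd (Pth e), last (Pth e)}"
  then obtain j where j: "j \<le> L e" "x = pv e j" "x \<noteq> pv e 0" "x \<noteq> pv e (L e)"
    unfolding set_Pth hd_Pth last_Pth by blast
  have "j \<noteq> 0" proof assume "j = 0" then show False using j(2,3) by simp qed
  moreover have "j \<noteq> L e" proof assume "j = L e" then show False using j(2,4) by simp qed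
  ultimately have "j \<in> {0<..<L e}" using j(1) by simp
  then show "x \<in> pv e ` {0<..<L e}" using j(2) by blast
next
  fix x assume "x \<in> pv e ` {0<..<L e}"
  then obtain j where j: "0 < j" "j < L e" "x = pv e j" by auto
  then have xr: "x = Inr (j * m + eid e)" by (simp add: pv_int)
  have "x \<in> set (Pth e)" unfolding set_Pth using j by auto
  moreover have "x \<noteq> hd (Pth e)" "x \<noteq> last (Pth e)" using xr e by (simp_all add: hd_Pth last_Pth)
  ultimately show "x \<in> set (Pth e) - {hd (Pth e), last (Pth e)}" by blast
qed

lemma int_Inl:
  assumes e: "e \<in> edges G"
  shows "(set (Pth e) - {hd (Pth e), last (Pth e)}) \<inter> Inl ` verts G = {}"
proof -
  have "pv e j \<notin> Inl ` verts G" if "j \<in> {0<..<L e}" for j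
    using that by (simp add: pv_int image_iff)
  then have A: "pv e ` {0<..<L e} \<inter> Inl ` verts G = {}" by blast
  show ?thesis using A unfolding int_Pth[OF e] by assumption
qed

lemma int_disj:
  assumes e: "e \<in> edges G" and e': "e' \<in> edges G" and ne: "e \<noteq> e'"
  shows "(set (Pth e) - {hd (Pth e), last (Pth e)}) \<inter> set (Pth e') = {}"
  unfolding int_Pth[OF e] unfolding set_Pth
proof (rule equals0I)
  fix x assume "x \<in> pv e ` {0<..<L e} \<inter> pv e' ` {..L e'}"
  then have x1: "x \<in> pv e ` {0<..<L e}" and x2: "x \<in> pv e' ` {..L e'}" by simp_all
  from x1 obtain j where j0: "j \<in> {0<..<L e}" "x = pv e j" by (rule imageE)
  from x2 obtain j' where j0': "j' \<in> {..L e'}" "x = pv e' j'" by (rule imageE)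
  have j: "0 < j" "j < L e" using j0 by auto
  have j': "j' \<le> L e'" using j0' by auto
  have eq: "pv e j = pv e' j'" using j0 j0' by simp
  have r: "pv e j = Inr (j * m + eid e)" using j by (simp add: pv_int)
  have "j' \<noteq> 0"
  proof assume "j' = 0" then have "pv e' j' = Inl (ex e')" by simp then show False using eq r by simp qed
  moreover have "j' \<noteq> L e'"
  proof assume "j' = L e'" then have "pv e' j' = Inl (ey e')" using e' by simp then show False using eq r by simp qed
  ultimately have "0 < j' \<and> j' < L e'" using j' by simp
  then show False using pv_inj[OF e e'] j eq ne by blast
qed

lemma H_ugraph: "ugraph H"
  unfolding ugraph_def
proof (intro conjI ballI)
  show "finite (verts H)" by (rule finite_H)
  fix x assume "x \<in> edges H"
  then obtain e j where ej: "e \<in> edges G" "j < L e" "x = {pv e j, pv e (Suc j)}" using edges_H by blast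
  have "Pth e ! j \<noteq> Pth e ! Suc j" using Pth_distinct[OF ej(1)] ej(2) by (simp add: nth_eq_iff_index_eq)
  then have "pv e j \<noteq> pv e (Suc j)" using ej(2) by (simp add: Pth_nth)
  moreover have "pv e j \<in> verts H" "pv e (Suc j) \<in> verts H" using ej pv_in_H by auto
  ultimately show "\<exists>u v. x = {u, v} \<and> u \<noteq> v \<and> u \<in> verts H \<and> v \<in> verts H"
    using ej(3) by blast
qed

lemma Pth_ok: "e \<in> edges G \<Longrightarrow> \<exists>u v. e = {u, v} \<and> path H (Pth e) \<and> hd (Pth e) = Inl u \<and> last (Pth e) = Inl v"
proof -
  assume e: "e \<in> edges G"
  have "hd (Pth e) = Inl (ex e)" by (simp add: hd_Pth)
  moreover have "last (Pth e) = Inl (ey e)" using e by (simp add: last_Pth)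
  moreover have "path H (Pth e)" using Pth_walk[OF e] Pth_distinct[OF e] by (simp add: path_def)
  ultimately show ?thesis using ex_ey(1)[OF e] by blast
qed

lemma H_subdivision: "subdivision H G Inl"
  unfolding subdivision_def
  apply (rule conjI, rule H_ugraph)
  apply (rule conjI, simp)
  apply (rule exI[of _ Pth])
  apply (intro conjI)
  using Pth_ok apply blast
  using int_Inl apply blast
  using int_disj apply blast
   apply (rule H_verts)
  apply (rule H_edges)
  done

lemma edge_H_Lip: assumes "Lip F" "{x,y} \<in> edges H" shows "F y \<le> F x + 1"
proof -
  obtain e j where ej: "e \<in> edges G" "j < L e" "{x,y} = {pv e j, pv e (Suc j)}" using edges_H[OF assms(2)] by blast
  have l: "F (pv e (Suc j)) \<le> F (pv e j) + 1 \<and> F (pv e j) \<le> F (pv e (Suc j)) + 1"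
    using assms(1) ej(1,2) unfolding Lip_def by blast
  from ej(3) have "(x = pv e j \<and> y = pv e (Suc j)) \<or> (x = pv e (Suc j) \<and> y = pv e j)"
    by (simp add: doubleton_eq_iff)
  then show ?thesis using l by (elim disjE) simp_all
qed

lemma walk_Lip: "Lip F \<Longrightarrow> walk H xs \<Longrightarrow> F (last xs) \<le> F (hd xs) + (length xs - 1)"
proof (induction xs rule: induct_list012)
  case 1 then show ?case by (simp add: walk_def)
next
  case (2 x) then show ?case by simp
next
  case (3 x y zs)
  then have w: "walk H (y # zs)" and xy: "{x,y} \<in> edges H" by (auto simp: walk_Cons2)
  have a: "F (last (y # zs)) \<le> F y + length zs" using 3(2)[OF 3(3) w] by (simp only: list.sel length_Cons diff_Suc_1)
  have b: "F y \<le> F x + 1" using edge_H_Lip[OF 3(3) xy] .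
  have l: "last (x # y # zs) = last (y # zs)" by simp
  have h: "hd (x # y # zs) = x" "length (x # y # zs) - 1 = Suc (length zs)" by simp_all
  show ?case unfolding l h using a b by linarith
qed

lemma growth_bound:
  assumes "\<forall>c\<in>verts H. \<exists>F. Lip F \<and> F c = 0 \<and> card {x\<in>verts H. F x \<le> r} \<le> b"
  shows "growth H r \<le> b"
proof -
  define S where "S = {card (verts H') | H'. subgraph H' H \<and> radius_le H' r}"
  have bnd: "s \<le> b" if sS: "s \<in> S" for s
  proof -
    obtain H' where H': "s = card (verts H')" "subgraph H' H" "radius_le H' r"
      using sS unfolding S_def mem_Collect_eq by blast
    obtain c where c: "c \<in> verts H'" "\<forall>v\<in>verts H'. dist_le H' c v r" using H'(3) unfolding radius_le_def by blast
    have sub: "verts H' \<subseteq> verts H" "edges H' \<subseteq> edges H" using H'(2) unfolding subgraph_def by blast+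
    have "c \<in> verts H" using c(1) sub by blast
    then obtain F where F: "Lip F" "F c = 0" "card {x\<in>verts H. F x \<le> r} \<le> b" using assms by blast
    have "verts H' \<subseteq> {x\<in>verts H. F x \<le> r}"
    proof
      fix v assume v: "v \<in> verts H'"
      then obtain xs where xs: "walk H' xs" "hd xs = c" "last xs = v" "length xs \<le> Suc r"
        using c v unfolding dist_le_def by blast
      have "walk H xs" using walk_mono[OF xs(1) sub] .
      then have "F v \<le> F c + (length xs - 1)" using walk_Lip[OF F(1)] xs(2,3) by blast
      then show "v \<in> {x\<in>verts H. F x \<le> r}" using F(2) xs(4) v sub by auto
    qed
    then have "card (verts H') \<le> card {x\<in>verts H. F x \<le> r}" using finite_H by (intro card_mono) auto
    then show ?thesis using H'(1) F(3) by simp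
  qed
  have "S \<subseteq> {..b}" using bnd by auto
  then have "finite S" using finite_subset by blast
  then have "Max (S \<union> {0}) \<le> b" using bnd by (intro Max.boundedI) auto
  then show ?thesis unfolding growth_def S_def .
qed

lemma mkpot_pv: "e \<in> edges G \<Longrightarrow> 0 < j \<Longrightarrow> j < L e \<Longrightarrow> mkpot fv \<phi> (pv e j) = \<phi> e j"
proof -
  assume e: "e \<in> edges G" and j: "0 < j" "j < L e"
  have "(j * m + eid e) mod m = eid e" using eid_lt[OF e] by simp
  moreover have "(j * m + eid e) div m = j" using eid_lt[OF e] by simp
  moreover have "inv_into (edges G) eid (eid e) = e" using eid_inj e by simp
  ultimately show ?thesis using j by (simp add: pv_int mkpot_def dec_def)
qed

lemma mkpot_pv_gen:
  assumes "e \<in> edges G" "j \<le> L e" "fv (ex e) = \<phi> e 0" "fv (ey e) = \<phi> e (L e)"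
  shows "mkpot fv \<phi> (pv e j) = \<phi> e j"
proof (cases "j = 0 \<or> j = L e")
  case True then show ?thesis using assms by (auto simp: mkpot_def)
next
  case False then show ?thesis using assms mkpot_pv by auto
qed

lemma Lip_mkpot:
  assumes "\<forall>e\<in>edges G. fv (ex e) = \<phi> e 0 \<and> fv (ey e) = \<phi> e (L e) \<and>
      (\<forall>j<L e. \<phi> e (Suc j) \<le> \<phi> e j + 1 \<and> \<phi> e j \<le> \<phi> e (Suc j) + 1)"
  shows "Lip (mkpot fv \<phi>)"
  unfolding Lip_def
proof (intro ballI allI impI)
  fix e j assume e: "e \<in> edges G" and j: "j < L e"
  have c: "fv (ex e) = \<phi> e 0" "fv (ey e) = \<phi> e (L e)" using assms e by blast+
  have "mkpot fv \<phi> (pv e j) = \<phi> e j" "mkpot fv \<phi> (pv e (Suc j)) = \<phi> e (Suc j)"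
    using mkpot_pv_gen[of e j fv \<phi>] mkpot_pv_gen[of e "Suc j" fv \<phi>] e c j by simp_all
  moreover have "\<phi> e (Suc j) \<le> \<phi> e j + 1 \<and> \<phi> e j \<le> \<phi> e (Suc j) + 1"
    using assms e j by blast
  ultimately show "mkpot fv \<phi> (pv e (Suc j)) \<le> mkpot fv \<phi> (pv e j) + 1 \<and> mkpot fv \<phi> (pv e j) \<le> mkpot fv \<phi> (pv e (Suc j)) + 1"
    by simp
qed

lemma min_lip: "(a'::nat) \<le> a + 1 \<Longrightarrow> b' \<le> b + 1 \<Longrightarrow> min a' b' \<le> min a b + 1"
  by (cases "a \<le> b") (simp_all add: min_def)

lemma Lip_min:
  assumes "Lip F1" "Lip F2" shows "Lip (\<lambda>x. min (F1 x) (F2 x))"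
  unfolding Lip_def
proof (intro ballI allI impI)
  fix e j assume e: "e \<in> edges G" "j < L e"
  have "F1 (pv e (Suc j)) \<le> F1 (pv e j) + 1 \<and> F1 (pv e j) \<le> F1 (pv e (Suc j)) + 1"
    using assms(1) e unfolding Lip_def by blast
  moreover have "F2 (pv e (Suc j)) \<le> F2 (pv e j) + 1 \<and> F2 (pv e j) \<le> F2 (pv e (Suc j)) + 1"
    using assms(2) e unfolding Lip_def by blast
  ultimately show "min (F1 (pv e (Suc j))) (F2 (pv e (Suc j))) \<le> min (F1 (pv e j)) (F2 (pv e j)) + 1 \<and>
       min (F1 (pv e j)) (F2 (pv e j)) \<le> min (F1 (pv e (Suc j))) (F2 (pv e (Suc j))) + 1"
    using min_lip by blast
qed

lemma Lip_plus: "Lip F \<Longrightarrow> Lip (\<lambda>x. c + F x)"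
  unfolding Lip_def by simp

lemma Lip_const: "Lip (\<lambda>x. c)"
  unfolding Lip_def by simp

end

context sd begin

definition touch :: "'v set \<Rightarrow> 'v set \<Rightarrow> bool" where
  "touch Zn e \<longleftrightarrow> ex e \<in> Zn \<or> ey e \<in> Zn"

definition phiZ :: "'v set \<Rightarrow> nat \<Rightarrow> 'v set \<Rightarrow> nat \<Rightarrow> nat" where
  "phiZ Zn s e j = (if L e \<le> s then (if ex e \<in> Zn then 0 else Suc s)
     else if ex e \<in> Zn then min j (Suc s) else if ey e \<in> Zn then min (L e - j) (Suc s) else Suc s)"

definition FZ :: "'v set \<Rightarrow> nat \<Rightarrow> 'v + nat \<Rightarrow> nat" where
  "FZ Zn s = mkpot (\<lambda>v. if v \<in> Zn then 0 else Suc s) (phiZ Zn s)"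

definition IntS :: "'v set \<Rightarrow> nat \<Rightarrow> 'v set \<Rightarrow> ('v + nat) set" where
  "IntS Zn s e = pv e ` {j. 0 < j \<and> j < L e \<and> (L e \<le> s \<or> (ex e \<in> Zn \<and> j \<le> s) \<or> (ey e \<in> Zn \<and> L e - j \<le> s))}"

definition cI :: "nat \<Rightarrow> 'v set \<Rightarrow> nat" where
  "cI s e = (if L e \<le> s then L e - 1 else s)"

definition Cnt :: "'v set \<Rightarrow> nat \<Rightarrow> nat" where
  "Cnt Zn s = card Zn + (\<Sum>e\<in>{e\<in>edges G. touch Zn e}. cI s e)"

definition zoneok :: "'v set \<Rightarrow> nat \<Rightarrow> bool" where
  "zoneok Zn s \<longleftrightarrow> Zn \<subseteq> verts G \<and>
     (\<forall>e\<in>edges G. L e \<le> s \<longrightarrow> (ex e \<in> Zn \<longleftrightarrow> ey e \<in> Zn)) \<and>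
     (\<forall>e\<in>edges G. s < L e \<longrightarrow> \<not> (ex e \<in> Zn \<and> ey e \<in> Zn))"

lemma zone_consistent:
  assumes "zoneok Zn s" "e \<in> edges G"
  shows "(if ex e \<in> Zn then 0 else Suc s) = phiZ Zn s e 0"
    "(if ey e \<in> Zn then 0 else Suc s) = phiZ Zn s e (L e)"
proof -
  have Z1: "L e \<le> s \<Longrightarrow> (ex e \<in> Zn \<longleftrightarrow> ey e \<in> Zn)" and Z2: "s < L e \<Longrightarrow> \<not> (ex e \<in> Zn \<and> ey e \<in> Zn)"
    using assms unfolding zoneok_def by auto
  show "(if ex e \<in> Zn then 0 else Suc s) = phiZ Zn s e 0"
    unfolding phiZ_def by auto
  show "(if ey e \<in> Zn then 0 else Suc s) = phiZ Zn s e (L e)"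
    unfolding phiZ_def using Z1 Z2 by auto
qed

lemma FZ_pv:
  assumes "zoneok Zn s" "e \<in> edges G" "j \<le> L e"
  shows "FZ Zn s (pv e j) = phiZ Zn s e j"
  unfolding FZ_def using mkpot_pv_gen[OF assms(2,3)] zone_consistent[OF assms(1,2)] by simp

lemma FZ_Inl: "FZ Zn s (Inl v) = (if v \<in> Zn then 0 else Suc s)"
  unfolding FZ_def mkpot_def by simp

lemma zone_Lip:
  assumes "zoneok Zn s"
  shows "Lip (FZ Zn s)"
  unfolding FZ_def
proof (rule Lip_mkpot, intro ballI conjI allI impI)
  fix e assume e: "e \<in> edges G"
  show "(if ex e \<in> Zn then 0 else Suc s) = phiZ Zn s e 0" "(if ey e \<in> Zn then 0 else Suc s) = phiZ Zn s e (L e)"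
    using zone_consistent[OF assms e] by simp_all
  fix j assume j: "j < L e"
  show "phiZ Zn s e (Suc j) \<le> phiZ Zn s e j + 1" "phiZ Zn s e j \<le> phiZ Zn s e (Suc j) + 1"
    unfolding phiZ_def using j by auto
qed

lemma zone_set:
  assumes "zoneok Zn s"
  shows "{x\<in>verts H. FZ Zn s x \<le> s} \<subseteq> Inl ` Zn \<union> (\<Union>e\<in>{e\<in>edges G. touch Zn e}. IntS Zn s e)"
proof
  fix x assume x: "x \<in> {x\<in>verts H. FZ Zn s x \<le> s}"
  then have xv: "x \<in> verts H" and xs: "FZ Zn s x \<le> s" by auto
  from xv consider v where "v \<in> verts G" "x = Inl v" | e j where "e \<in> edges G" "0 < j" "j < L e" "x = pv e j"
    unfolding verts_H by blast
  then show "x \<in> Inl ` Zn \<union> (\<Union>e\<in>{e\<in>edges G. touch Zn e}. IntS Zn s e)"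
  proof cases
    case 1
    then have "v \<in> Zn" using xs by (simp add: FZ_Inl split: if_splits)
    then show ?thesis using 1 by blast
  next
    case 2
    then have ph: "phiZ Zn s e j \<le> s" using xs FZ_pv[OF assms 2(1)] by simp
    have "touch Zn e \<and> (L e \<le> s \<or> (ex e \<in> Zn \<and> j \<le> s) \<or> (ey e \<in> Zn \<and> L e - j \<le> s))"
      using ph unfolding phiZ_def touch_def by (auto split: if_splits)
    then have "x \<in> IntS Zn s e" "touch Zn e" unfolding IntS_def using 2 by auto
    then show ?thesis using 2(1) by blast
  qed
qed

lemma card_IntS:
  assumes "zoneok Zn s" "e \<in> edges G"
  shows "card (IntS Zn s e) \<le> cI s e"
proof (cases "L e \<le> s")
  case True
  have "IntS Zn s e \<subseteq> pv e ` {0<..<L e}" unfolding IntS_def by auto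
  then have "card (IntS Zn s e) \<le> card (pv e ` {0<..<L e})" by (intro card_mono) auto
  also have "\<dots> \<le> card {0<..<L e}" by (rule card_image_le) simp
  finally show ?thesis unfolding cI_def using True by simp
next
  case False
  have nb: "\<not> (ex e \<in> Zn \<and> ey e \<in> Zn)" using assms False unfolding zoneok_def by auto
  have "{j. 0 < j \<and> j < L e \<and> (L e \<le> s \<or> (ex e \<in> Zn \<and> j \<le> s) \<or> (ey e \<in> Zn \<and> L e - j \<le> s))}
        \<subseteq> (if ex e \<in> Zn then {1..s} else {L e - s..<L e})" (is "?J \<subseteq> _")
    using False nb by auto
  then have "card ?J \<le> card (if ex e \<in> Zn then {1..s} else {L e - s..<L e})" by (intro card_mono) auto
  also have "\<dots> \<le> s" using False by auto
  finally have "card ?J \<le> s" .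
  then have "card (IntS Zn s e) \<le> s" unfolding IntS_def using card_image_le[of ?J "pv e"] by simp
  then show ?thesis unfolding cI_def using False by simp
qed

lemma finite_touch: "finite {e\<in>edges G. touch Zn e}" using finite_E by simp

lemma zone_card:
  assumes "zoneok Zn s"
  shows "card {x\<in>verts H. FZ Zn s x \<le> s} \<le> Cnt Zn s"
proof -
  have fZ: "finite Zn" using assms finite_V finite_subset unfolding zoneok_def by blast
  have "card {x\<in>verts H. FZ Zn s x \<le> s} \<le> card (Inl ` Zn \<union> (\<Union>e\<in>{e\<in>edges G. touch Zn e}. IntS Zn s e))"
    using zone_set[OF assms] fZ finite_touch by (intro card_mono) (auto simp: IntS_def)
  also have "\<dots> \<le> card (Inl ` Zn :: ('v + nat) set) + card (\<Union>e\<in>{e\<in>edges G. touch Zn e}. IntS Zn s e)" by (rule card_Un_le)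
  also have "\<dots> \<le> card Zn + (\<Sum>e\<in>{e\<in>edges G. touch Zn e}. card (IntS Zn s e))"
    using card_image_le[OF fZ, of "Inl :: 'v \<Rightarrow> 'v + nat"] card_UN_le[OF finite_touch[of Zn], of "IntS Zn s"] by linarith
  also have "\<dots> \<le> card Zn + (\<Sum>e\<in>{e\<in>edges G. touch Zn e}. cI s e)"
    using card_IntS[OF assms] by (intro add_left_mono sum_mono) auto
  finally show ?thesis unfolding Cnt_def .
qed

definition pset :: "'v set \<Rightarrow> ('v + nat) set" where "pset e = pv e ` {..L e}"

lemma zone_card_excl:
  assumes "zoneok Zn s" "e0 \<in> edges G" "s < L e0" "u \<in> Zn" "u = ex e0 \<or> u = ey e0"
  shows "card ({x\<in>verts H. FZ Zn s x \<le> s} - pset e0) + s + 1 \<le> Cnt Zn s"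
proof -
  have fZ: "finite Zn" using assms finite_V finite_subset unfolding zoneok_def by blast
  define S where "S = {e\<in>edges G. touch Zn e}"
  have e0S: "e0 \<in> S" using assms unfolding S_def touch_def by auto
  have fS: "finite S" using finite_touch S_def by simp
  have uI: "Inl u \<in> pset e0" using assms(5) assms(2) unfolding pset_def
    by (metis atMost_iff image_eqI le0 order_refl pv_0 pv_L)
  have "IntS Zn s e0 \<subseteq> pset e0" unfolding IntS_def pset_def by auto
  then have "{x\<in>verts H. FZ Zn s x \<le> s} - pset e0 \<subseteq> Inl ` (Zn - {u}) \<union> (\<Union>e\<in>S - {e0}. IntS Zn s e)"
    using zone_set[OF assms(1)] uI unfolding S_def by blast
  then have "card ({x\<in>verts H. FZ Zn s x \<le> s} - pset e0) \<le> card (Inl ` (Zn - {u}) \<union> (\<Union>e\<in>S - {e0}. IntS Zn s e))"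
    using fZ fS by (intro card_mono) (auto simp: IntS_def)
  also have "\<dots> \<le> card (Inl ` (Zn - {u}) :: ('v + nat) set) + card (\<Union>e\<in>S - {e0}. IntS Zn s e)" by (rule card_Un_le)
  also have "\<dots> \<le> card (Zn - {u}) + (\<Sum>e\<in>S - {e0}. card (IntS Zn s e))"
    using card_image_le[of "Zn - {u}" "Inl :: 'v \<Rightarrow> 'v + nat"] fZ card_UN_le[of "S - {e0}" "IntS Zn s"] fS by simp
  also have "\<dots> \<le> card (Zn - {u}) + (\<Sum>e\<in>S - {e0}. cI s e)"
    using card_IntS[OF assms(1)] unfolding S_def by (intro add_left_mono sum_mono) auto
  finally have 1: "card ({x\<in>verts H. FZ Zn s x \<le> s} - pset e0) \<le> card (Zn - {u}) + (\<Sum>e\<in>S - {e0}. cI s e)" .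
  have "card Zn > 0" using fZ assms(4) card_gt_0_iff by blast
  then have 2: "card (Zn - {u}) + 1 = card Zn" using fZ assms(4) by simp
  have 3: "(\<Sum>e\<in>S - {e0}. cI s e) + cI s e0 = (\<Sum>e\<in>S. cI s e)"
    using sum.remove[OF fS e0S, of "cI s"] by simp
  have 4: "cI s e0 = s" using assms(3) unfolding cI_def by simp
  show ?thesis using 1 2 3 4 unfolding Cnt_def S_def by linarith
qed

end

context sd begin

definition CC :: "'v set \<Rightarrow> nat \<Rightarrow> nat \<Rightarrow> 'v + nat \<Rightarrow> nat" where
  "CC e0 p r = mkpot (\<lambda>w. if w = ex e0 then min p (Suc r) else if w = ey e0 then min (L e0 - p) (Suc r) else Suc r)
     (\<lambda>e j. if e = e0 then min (if j \<le> p then p - j else j - p) (Suc r) else Suc r)"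

lemma CC_e0:
  assumes "e0 \<in> edges G" "p < L e0" "j \<le> L e0"
  shows "CC e0 p r (pv e0 j) = min (if j \<le> p then p - j else j - p) (Suc r)"
proof -
  have "ex e0 \<noteq> ey e0" using ex_ey(2)[OF assms(1)] .
  then show ?thesis unfolding CC_def using mkpot_pv_gen[OF assms(1,3)] assms(2) by simp
qed

lemma CC_other:
  assumes "e0 \<in> edges G" "e \<in> edges G" "e \<noteq> e0" "j \<le> L e" "CC e0 p r (pv e j) \<le> r"
  shows "(pv e j = Inl (ex e0) \<and> CC e0 p r (pv e j) = p) \<or> (pv e j = Inl (ey e0) \<and> CC e0 p r (pv e j) = L e0 - p)"
proof (cases "j = 0 \<or> j = L e")
  case True
  then obtain w where w: "pv e j = Inl w" using assms(2) by auto
  then show ?thesis using assms(5) unfolding CC_def mkpot_def by (auto split: if_splits)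
next
  case False
  then have "CC e0 p r (pv e j) = Suc r" unfolding CC_def using mkpot_pv[OF assms(2)] assms(3,4) by simp
  then show ?thesis using assms(5) by simp
qed

lemma CC_Inl: "CC e0 p r (Inl w) = (if w = ex e0 then min p (Suc r) else if w = ey e0 then min (L e0 - p) (Suc r) else Suc r)"
  unfolding CC_def mkpot_def by simp

lemma step_aux:
  fixes a b :: "'v + nat" and Fu Fv G1 C :: "'v + nat \<Rightarrow> nat"
  assumes "G1 b \<le> G1 a + 1" "Fu b \<le> Fu a + 1" "Fv b \<le> Fv a + 1"
    and "\<And>x. G1 x \<le> Suc r" "\<And>x. G1 x \<le> p + Fu x" "\<And>x. G1 x \<le> q + Fv x"
    and "C a \<le> r \<Longrightarrow> (Fu a = 0 \<and> C a = p) \<or> (Fv a = 0 \<and> C a = q)"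
  shows "min (C b) (G1 b) \<le> min (C a) (G1 a) + 1"
proof (cases "G1 a \<le> C a")
  case True then show ?thesis using assms(1) by (simp add: min_def)
next
  case False
  then have "C a \<le> r" using assms(4)[of a] by simp
  then have "(Fu a = 0 \<and> C a = p) \<or> (Fv a = 0 \<and> C a = q)" by (rule assms(7))
  then show ?thesis
  proof (elim disjE conjE)
    assume 1: "Fu a = 0" "C a = p"
    have "G1 b \<le> p + 1" using assms(5)[of b] assms(2) 1 by simp
    then show ?thesis using False 1 by (simp add: min_def)
  next
    assume 2: "Fv a = 0" "C a = q"
    have "G1 b \<le> q + 1" using assms(6)[of b] assms(3) 2 by simp
    then show ?thesis using False 2 by (simp add: min_def)
  qed
qed

lemma edge_center:
  assumes e0: "e0 \<in> edges G" and p: "0 < p" "p < L e0" and rL: "r < L e0"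
    and zu: "zoneok Zu (r - p)" "ex e0 \<in> Zu"
    and zv: "zoneok Zv (r - (L e0 - p))" "ey e0 \<in> Zv"
  shows "\<exists>F. Lip F \<and> F (pv e0 p) = 0 \<and>
    card {x\<in>verts H. F x \<le> r} \<le> min p r + min (L e0 - p) r + 1
      + (if p \<le> r then card ({x\<in>verts H. FZ Zu (r - p) x \<le> r - p} - pset e0) else 0)
      + (if L e0 - p \<le> r then card ({x\<in>verts H. FZ Zv (r - (L e0 - p)) x \<le> r - (L e0 - p)} - pset e0) else 0)"
proof -
  define q where "q = L e0 - p"
  define su where "su = r - p"
  define sv where "sv = r - q"
  define Fu where "Fu = FZ Zu su"
  define Fv where "Fv = FZ Zv sv"
  define C where "C = CC e0 p r"
  define G1 where "G1 = (\<lambda>x. min (Suc r) (min (p + Fu x) (q + Fv x)))"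
  define X where "X = (\<lambda>x. min (C x) (G1 x))"
  have zu': "zoneok Zu su" using zu su_def by simp
  have zv': "zoneok Zv sv" using zv sv_def q_def by simp
  have LFu: "Lip Fu" unfolding Fu_def using zone_Lip[OF zu'] .
  have LFv: "Lip Fv" unfolding Fv_def using zone_Lip[OF zv'] .
  have LG1: "Lip G1" unfolding G1_def
    by (intro Lip_min Lip_const Lip_plus LFu LFv)
  have Fu0: "Fu (Inl (ex e0)) = 0" unfolding Fu_def using zu(2) by (simp add: FZ_Inl)
  have Fv0: "Fv (Inl (ey e0)) = 0" unfolding Fv_def using zv(2) by (simp add: FZ_Inl)
  have G1b: "\<And>x. G1 x \<le> Suc r" "\<And>x. G1 x \<le> p + Fu x" "\<And>x. G1 x \<le> q + Fv x" unfolding G1_def by auto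
  have LX: "Lip X" unfolding Lip_def
  proof (intro ballI allI impI)
    fix e j assume e: "e \<in> edges G" and j: "j < L e"
    have g: "G1 (pv e (Suc j)) \<le> G1 (pv e j) + 1 \<and> G1 (pv e j) \<le> G1 (pv e (Suc j)) + 1"
      using LG1 e j unfolding Lip_def by blast
    show "X (pv e (Suc j)) \<le> X (pv e j) + 1 \<and> X (pv e j) \<le> X (pv e (Suc j)) + 1"
    proof (cases "e = e0")
      case True
      have "C (pv e (Suc j)) \<le> C (pv e j) + 1 \<and> C (pv e j) \<le> C (pv e (Suc j)) + 1"
        unfolding C_def using CC_e0[OF e0 p(2), of j r] CC_e0[OF e0 p(2), of "Suc j" r] j True by auto
      then show ?thesis unfolding X_def using g min_lip by blast
    next
      case False
      have fu: "Fu (pv e (Suc j)) \<le> Fu (pv e j) + 1 \<and> Fu (pv e j) \<le> Fu (pv e (Suc j)) + 1"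
        using LFu e j unfolding Lip_def by blast
      have fv: "Fv (pv e (Suc j)) \<le> Fv (pv e j) + 1 \<and> Fv (pv e j) \<le> Fv (pv e (Suc j)) + 1"
        using LFv e j unfolding Lip_def by blast
      have cc: "C (pv e i) \<le> r \<Longrightarrow> (Fu (pv e i) = 0 \<and> C (pv e i) = p) \<or> (Fv (pv e i) = 0 \<and> C (pv e i) = q)"
        if "i \<le> L e" for i
        using CC_other[OF e0 e False that] Fu0 Fv0 unfolding C_def q_def by metis
      show ?thesis unfolding X_def
        using step_aux[of G1 "pv e (Suc j)" "pv e j" Fu Fv r p q C, OF _ _ _ G1b]
              step_aux[of G1 "pv e j" "pv e (Suc j)" Fu Fv r p q C, OF _ _ _ G1b]
              g fu fv cc[of j] cc[of "Suc j"] j by simp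
    qed
  qed
  have X0: "X (pv e0 p) = 0" unfolding X_def C_def using CC_e0[OF e0 p(2), of p r] p by simp
  define A0 where "A0 = pv e0 ` {j. j \<le> L e0 \<and> j \<le> p + r \<and> p \<le> j + r}"
  define Bu where "Bu = (if p \<le> r then {x\<in>verts H. Fu x \<le> su} - pset e0 else {})"
  define Bv where "Bv = (if q \<le> r then {x\<in>verts H. Fv x \<le> sv} - pset e0 else {})"
  have sub: "{x\<in>verts H. X x \<le> r} \<subseteq> A0 \<union> Bu \<union> Bv"
  proof
    fix x assume x: "x \<in> {x\<in>verts H. X x \<le> r}"
    then have xv: "x \<in> verts H" and xr: "X x \<le> r" by auto
    have pLq: "L e0 = p + q" using q_def p by simp
    consider "C x \<le> r" | "p + Fu x \<le> r" | "q + Fv x \<le> r"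
      using xr unfolding X_def G1_def by linarith
    then show "x \<in> A0 \<union> Bu \<union> Bv"
    proof cases
      case 1
      from xv consider w where "w \<in> verts G" "x = Inl w" | e j where "e \<in> edges G" "0 < j" "j < L e" "x = pv e j"
        unfolding verts_H by blast
      then show ?thesis
      proof cases
        case (1 w)
        then have "w = ex e0 \<and> p \<le> r \<or> w = ey e0 \<and> q \<le> r" using \<open>C x \<le> r\<close> unfolding C_def q_def
          by (auto simp: CC_Inl split: if_splits)
        then show ?thesis
        proof
          assume "w = ex e0 \<and> p \<le> r"
          then have "x = pv e0 0" using 1 by simp
          moreover have "(0::nat) \<in> {j. j \<le> L e0 \<and> j \<le> p + r \<and> p \<le> j + r}" using \<open>w = ex e0 \<and> p \<le> r\<close> by simp
          ultimately have "x \<in> A0" unfolding A0_def by blast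
          then show ?thesis by blast
        next
          assume "w = ey e0 \<and> q \<le> r"
          then have "x = pv e0 (L e0)" using 1 e0 by simp
          moreover have "L e0 \<le> p + r" "p \<le> L e0 + r" using pLq \<open>w = ey e0 \<and> q \<le> r\<close> by auto
          ultimately have "x \<in> A0" unfolding A0_def by auto
          then show ?thesis by blast
        qed
      next
        case (2 e j)
        show ?thesis
        proof (cases "e = e0")
          case True
          then have "min (if j \<le> p then p - j else j - p) (Suc r) \<le> r"
            using \<open>C x \<le> r\<close> 2 CC_e0[OF e0 p(2), of j r] unfolding C_def by simp
          then have "j \<le> p + r" "p \<le> j + r" by (auto split: if_splits)
          then show ?thesis unfolding A0_def using 2 True by auto
        next
          case False
          then have "C x = Suc r" unfolding C_def CC_def using mkpot_pv[OF 2(1-3)] 2(4) by simp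
          then show ?thesis using \<open>C x \<le> r\<close> by simp
        qed
      qed
    next
      case 2
      then have pr: "p \<le> r" and fu: "Fu x \<le> su" unfolding su_def by auto
      show ?thesis
      proof (cases "x \<in> pset e0")
        case True
        then obtain j where j: "j \<le> L e0" "x = pv e0 j" unfolding pset_def by auto
        have "Fu x = phiZ Zu su e0 j" unfolding Fu_def using FZ_pv[OF zu' e0 j(1)] j(2) by simp
        also have "\<dots> = min j (Suc su)" unfolding phiZ_def using zu(2) rL su_def by auto
        finally have "j \<le> su" using fu by simp
        then show ?thesis unfolding A0_def su_def using j pr by auto
      next
        case False
        then show ?thesis unfolding Bu_def using pr fu xv by auto
      qed
    next
      case 3
      then have qr: "q \<le> r" and fv: "Fv x \<le> sv" unfolding sv_def by auto
      show ?thesis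
      proof (cases "x \<in> pset e0")
        case True
        then obtain j where j: "j \<le> L e0" "x = pv e0 j" unfolding pset_def by auto
        have nb: "ex e0 \<notin> Zv" using zv' zv(2) e0 rL unfolding zoneok_def sv_def by auto
        have "Fv x = phiZ Zv sv e0 j" unfolding Fv_def using FZ_pv[OF zv' e0 j(1)] j(2) by simp
        also have "\<dots> = min (L e0 - j) (Suc sv)" unfolding phiZ_def using zv(2) nb rL sv_def by auto
        finally have "L e0 - j \<le> sv" using fv by simp
        then have "j \<le> p + r" "p \<le> j + r" using j(1) qr pLq sv_def by auto
        then show ?thesis unfolding A0_def using j by auto
      next
        case False
        then show ?thesis unfolding Bv_def using qr fv xv by auto
      qed
    qed
  qed
  have cA: "card A0 \<le> min p r + min q r + 1"
  proof -
    have "{j. j \<le> L e0 \<and> j \<le> p + r \<and> p \<le> j + r} = {p - r..min (L e0) (p + r)}" by auto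
    then have "card {j. j \<le> L e0 \<and> j \<le> p + r \<and> p \<le> j + r} = min (L e0) (p + r) + 1 - (p - r)" by simp
    also have "\<dots> \<le> min p r + min q r + 1" unfolding q_def using p by (simp add: min_def; arith)
    finally show ?thesis unfolding A0_def using card_image_le[of "{j. j \<le> L e0 \<and> j \<le> p + r \<and> p \<le> j + r}" "pv e0"] by simp
  qed
  have fin: "finite A0" "finite Bu" "finite Bv" unfolding A0_def Bu_def Bv_def using finite_H by auto
  have "card {x\<in>verts H. X x \<le> r} \<le> card (A0 \<union> Bu \<union> Bv)" using sub fin by (intro card_mono) auto
  also have "\<dots> \<le> card A0 + card Bu + card Bv" by (meson card_Un_le add_right_mono order_trans)
  finally have "card {x\<in>verts H. X x \<le> r} \<le> min p r + min q r + 1 + card Bu + card Bv" using cA by linarith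
  moreover have "card Bu = (if p \<le> r then card ({x\<in>verts H. FZ Zu (r - p) x \<le> r - p} - pset e0) else 0)"
    unfolding Bu_def Fu_def su_def by simp
  moreover have "card Bv = (if L e0 - p \<le> r then card ({x\<in>verts H. FZ Zv (r - (L e0 - p)) x \<le> r - (L e0 - p)} - pset e0) else 0)"
    unfolding Bv_def Fv_def sv_def q_def by simp
  ultimately show ?thesis using LX X0 unfolding q_def by (intro exI[of _ X]) auto
qed

end

locale tsd = sd G L eid m
  for G :: "('a \<times> nat) ugraph" and L eid m +
  fixes T :: "'a ugraph" and k \<Delta> M :: nat and r0 :: 'a and key dT :: "'a \<Rightarrow> nat"
  assumes tr: "tree T"
    and subG: "subgraph G (strong_product T (complete_graph k))"
    and deg: "max_degree_le G \<Delta>"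
    and M2: "2 \<le> M"
    and key_inj: "inj_on key (verts T)"
    and key_step: "\<forall>a\<in>verts T. a \<noteq> r0 \<longrightarrow> (\<exists>b\<in>verts T. {a,b} \<in> edges T \<and> dT b < dT a \<and> key a < key b)"
    and r0T: "r0 \<in> verts T"
    and Ldef: "\<And>e. e \<in> edges G \<Longrightarrow> L e = M ^ Suc (max (key (fst (ex e))) (key (fst (ey e))))"
begin

definition mk :: "('a \<times> nat) set \<Rightarrow> nat" where "mk e = max (key (fst (ex e))) (key (fst (ey e)))"

lemma gvert: "x \<in> verts G \<Longrightarrow> fst x \<in> verts T \<and> snd x < k"
proof -
  assume x: "x \<in> verts G"
  have "verts G \<subseteq> verts (strong_product T (complete_graph k))" using subG unfolding subgraph_def by blast
  then have "x \<in> verts T \<times> {0..<k}" using x unfolding strong_product_def complete_graph_def verts_def by auto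
  then show ?thesis by auto
qed

lemma gedge:
  assumes e: "e \<in> edges G"
  shows "fst (ex e) = fst (ey e) \<or> {fst (ex e), fst (ey e)} \<in> edges T"
proof -
  have "e \<in> edges (strong_product T (complete_graph k))" using subG e unfolding subgraph_def by blast
  then obtain v w v' w' where vw: "e = {(v, w), (v', w')}" "v = v' \<or> {v, v'} \<in> edges T"
    unfolding strong_product_def edges_def by auto
  have "{ex e, ey e} = {(v, w), (v', w')}" using ex_ey(1)[OF e] vw(1) by simp
  then have "(ex e = (v,w) \<and> ey e = (v',w')) \<or> (ex e = (v',w') \<and> ey e = (v,w))" by (auto simp: doubleton_eq_iff)
  then show ?thesis using vw(2) by (auto simp: insert_commute)
qed

lemma mono_pow: "a \<le> b \<Longrightarrow> M ^ Suc a \<le> M ^ Suc b"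
  using M2 by (intro power_increasing) auto

lemma strict_pow: "a < b \<Longrightarrow> M ^ Suc a < M ^ Suc b"
  using M2 by (intro power_strict_increasing) auto

lemma L_eq: "e \<in> edges G \<Longrightarrow> L e = M ^ Suc (mk e)" using Ldef mk_def by simp

lemma mk_node: "e \<in> edges G \<Longrightarrow> mk e = key (fst (ex e)) \<or> mk e = key (fst (ey e))"
  unfolding mk_def by (simp add: max_def)

lemma degE: "z \<in> verts G \<Longrightarrow> card {e\<in>edges G. z \<in> e} \<le> \<Delta>"
  using deg unfolding max_degree_le_def by blast

lemma touch_single: "e \<in> edges G \<Longrightarrow> touch {u} e \<longleftrightarrow> u \<in> e"
  unfolding touch_def using in_edge_iff by auto

lemma cI_le: "cI s e \<le> s" unfolding cI_def by auto

lemma star_zone: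
  assumes u: "u \<in> verts G" and long: "\<And>e. e \<in> edges G \<Longrightarrow> u \<in> e \<Longrightarrow> s < L e"
  shows "zoneok {u} s \<and> Cnt {u} s \<le> 1 + \<Delta> * s"
proof
  show "zoneok {u} s" unfolding zoneok_def
  proof (intro conjI ballI impI)
    show "{u} \<subseteq> verts G" using u by simp
    fix e assume e: "e \<in> edges G"
    { assume "L e \<le> s"
      then have "u \<notin> e" using long[OF e] by force
      then show "(ex e \<in> {u}) = (ey e \<in> {u})" using in_edge_iff[OF e] by auto }
    { assume "s < L e" show "\<not> (ex e \<in> {u} \<and> ey e \<in> {u})" using ex_ey(2)[OF e] by auto }
  qed
  have S: "{e\<in>edges G. touch {u} e} = {e\<in>edges G. u \<in> e}" using touch_single[of _ u] by blast
  have "(\<Sum>e\<in>{e\<in>edges G. u \<in> e}. cI s e) \<le> (\<Sum>e\<in>{e\<in>edges G. u \<in> e}. s)"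
    by (intro sum_mono) (simp add: cI_le)
  also have "\<dots> = card {e\<in>edges G. u \<in> e} * s" by simp
  also have "\<dots> \<le> \<Delta> * s" using degE[OF u] by (intro mult_right_mono) auto
  finally show "Cnt {u} s \<le> 1 + \<Delta> * s" unfolding Cnt_def S by simp
qed

end

context tsd begin

lemma finite_T: "finite (verts T)" using tr unfolding tree_def ugraph_def by (elim conjE)

lemma Pc: "\<forall>p\<in>verts T - {a. key a < \<kappa>}. \<forall>p'\<in>verts T - {a. key a < \<kappa>}. \<exists>xs. walk T xs \<and> set xs \<subseteq> verts T - {a. key a < \<kappa>} \<and> hd xs = p \<and> last xs = p'"
  by (rule P_connected[OF key_step r0T])

lemma endpoints_rel:
  assumes "e \<in> edges G"
  shows "ex e \<in> verts G" "ey e \<in> verts G" "fst (ex e) = fst (ey e) \<or> {fst (ex e), fst (ey e)} \<in> edges T"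
    "fst (ey e) = fst (ex e) \<or> {fst (ey e), fst (ex e)} \<in> edges T"
  using ex_ey[OF assms] gedge[OF assms] by (auto simp: insert_commute)

lemma zone_exists:
  assumes u: "u \<in> verts G"
  shows "\<exists>Zn. zoneok Zn s \<and> u \<in> Zn \<and> (Cnt Zn s \<le> 1 + \<Delta> * s \<or>
     (M \<le> s \<and> M * Cnt Zn s \<le> M * card (verts G) + card (edges G) * s + M * (k * \<Delta>) * s))"
proof -
  define A where "A = {a \<in> verts T. M ^ Suc (key a) \<le> s}"
  have Lnode: "\<exists>a\<in>verts T. mk e = key a \<and> (a = fst (ex e) \<or> a = fst (ey e))" if e: "e \<in> edges G" for e
    using mk_node[OF e] gvert[OF endpoints_rel(1)[OF e]] gvert[OF endpoints_rel(2)[OF e]] by metis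
  have mk_ge: "key (fst x) \<le> mk e" if "e \<in> edges G" "x \<in> e" for e x
    using in_edge_iff[OF that(1)] that(2) unfolding mk_def by auto
  show ?thesis
  proof (cases "A = {}")
    case True
    have "s < L e" if ee: "e \<in> edges G" "u \<in> e" for e
    proof -
      obtain a where a: "a \<in> verts T" "mk e = key a" using Lnode[OF ee(1)] by blast
      then have "a \<notin> A" using True by simp
      then show ?thesis using a ee(1) L_eq A_def by simp
    qed
    then show ?thesis using star_zone[OF u] by blast
  next
    case False
    have fA: "finite A" using finite_T A_def by simp
    define \<kappa> where "\<kappa> = Max (key ` A)"
    have "\<kappa> \<in> key ` A" unfolding \<kappa>_def using fA False by (intro Max_in) auto
    then obtain \<tau> where \<tau>: "\<tau> \<in> A" "key \<tau> = \<kappa>" by auto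
    have \<tau>T: "\<tau> \<in> verts T" and \<tau>s: "M ^ Suc \<kappa> \<le> s" using \<tau> A_def by auto
    have short_iff: "M ^ Suc (key a) \<le> s \<longleftrightarrow> key a \<le> \<kappa>" if "a \<in> verts T" for a
    proof
      assume "M ^ Suc (key a) \<le> s" then have "a \<in> A" using that A_def by simp
      then show "key a \<le> \<kappa>" unfolding \<kappa>_def using fA by simp
    next
      assume "key a \<le> \<kappa>" then show "M ^ Suc (key a) \<le> s" using mono_pow \<tau>s order_trans by blast
    qed
    have eshort: "L e \<le> s \<longleftrightarrow> mk e \<le> \<kappa>" if e: "e \<in> edges G" for e
      using Lnode[OF e] short_iff L_eq[OF e] by metis
    have sM: "M \<le> s"
    proof -
      have "M ^ 1 \<le> M ^ Suc \<kappa>" using M2 by (intro power_increasing) auto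
      then have "M \<le> M ^ Suc \<kappa>" by (simp only: power_one_right)
      then show ?thesis using \<tau>s by (rule order_trans)
    qed
    show ?thesis
    proof (cases "\<kappa> < key (fst u)")
      case True
      have "s < L e" if "e \<in> edges G" "u \<in> e" for e
        using mk_ge[OF that] True eshort[OF that(1)] by linarith
      then show ?thesis using star_zone[OF u] by blast
    next
      case False
      define R where "R = {a. key a < \<kappa>}"
      have \<tau>R: "\<tau> \<notin> R" using \<tau> R_def by simp
      have node_cases: "a \<in> R \<or> a = \<tau>" if "a \<in> verts T" "key a \<le> \<kappa>" for a
      proof (cases "key a < \<kappa>")
        case True then show ?thesis using R_def by simp
      next
        case False then have "key a = key \<tau>" using that \<tau> by simp
        then show ?thesis using key_inj that(1) \<tau>T inj_on_eq_iff by metis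
      qed
      have rii: "rho T R a = p" if "a \<in> R" "a \<in> verts T" "{a,p} \<in> edges T" "p \<in> verts T" "p \<notin> R" for a p
        using rho_ii[OF tr, of R a p] Pc[of \<kappa>] that unfolding R_def by auto
      have ri: "rho T R a = rho T R b" if "a \<in> R" "b \<in> R" "a \<in> verts T" "b \<in> verts T" "{a,b} \<in> edges T" for a b
        using rho_i that by metis
      define \<zeta> where "\<zeta> = (if fst u = \<tau> then \<tau> else rho T R (fst u))"
      define Zn where "Zn = {x \<in> verts G. (fst x \<in> R \<and> rho T R (fst x) = \<zeta>) \<or> (fst x = \<tau> \<and> \<zeta> = \<tau>)}"
      have uZ: "u \<in> Zn"
      proof (cases "fst u = \<tau>")
        case True then show ?thesis using u Zn_def \<zeta>_def by simp
      next
        case False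
        then have "fst u \<in> R" using node_cases[of "fst u"] gvert[OF u] \<open>\<not> \<kappa> < key (fst u)\<close> by simp
        then show ?thesis using u Zn_def \<zeta>_def False by simp
      qed
      have closure: "y \<in> Zn" if xy: "x \<in> verts G" "y \<in> verts G" "fst x = fst y \<or> {fst x, fst y} \<in> edges T"
        "key (fst x) \<le> \<kappa>" "key (fst y) \<le> \<kappa>" "x \<in> Zn" for x y
      proof (cases "fst x = fst y")
        case True then show ?thesis using xy Zn_def by simp
      next
        case False
        then have E: "{fst x, fst y} \<in> edges T" using xy(3) by simp
        have aT: "fst x \<in> verts T" and bT: "fst y \<in> verts T" using gvert xy(1,2) by auto
        have ca: "fst x \<in> R \<or> fst x = \<tau>" and cb: "fst y \<in> R \<or> fst y = \<tau>" using node_cases aT bT xy(4,5) by auto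
        show ?thesis
        proof (cases "fst x \<in> R")
          case aR: True
          then have rx: "rho T R (fst x) = \<zeta>" using xy(6) \<tau>R Zn_def by auto
          show ?thesis
          proof (cases "fst y \<in> R")
            case True
            then show ?thesis using ri[OF aR True aT bT E] rx xy(2) Zn_def by simp
          next
            case bn: False
            then have "fst y = \<tau>" using cb by simp
            then have "rho T R (fst x) = \<tau>" using rii[OF aR aT E bT bn] by simp
            then show ?thesis using rx \<open>fst y = \<tau>\<close> xy(2) Zn_def by simp
          qed
        next
          case an: False
          then have "fst x = \<tau>" "\<zeta> = \<tau>" using ca xy(6) Zn_def by auto
          then have bR: "fst y \<in> R" using cb False by auto
          have "{fst y, fst x} \<in> edges T" using E by (simp add: insert_commute)
          then have "rho T R (fst y) = \<tau>" using rii[OF bR bT _ aT an] \<open>fst x = \<tau>\<close> by simp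
          then show ?thesis using bR \<open>\<zeta> = \<tau>\<close> xy(2) Zn_def by simp
        qed
      qed
      have ZnT: "key (fst x) \<le> \<kappa>" if "x \<in> Zn" for x
        using that \<tau> unfolding Zn_def R_def by auto
      have zok: "zoneok Zn s" unfolding zoneok_def
      proof (intro conjI ballI impI)
        show "Zn \<subseteq> verts G" unfolding Zn_def by blast
        fix e assume e: "e \<in> edges G"
        { assume "L e \<le> s"
          then have mk: "mk e \<le> \<kappa>" using eshort[OF e] by simp
          then have k1: "key (fst (ex e)) \<le> \<kappa>" "key (fst (ey e)) \<le> \<kappa>" unfolding mk_def by auto
          show "(ex e \<in> Zn) = (ey e \<in> Zn)"
            using closure[OF endpoints_rel(1,2,3)[OF e] k1] closure[OF endpoints_rel(2,1,4)[OF e] k1(2,1)] by blast }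
        { assume "s < L e"
          then have "\<kappa> < mk e" using eshort[OF e] by simp
          then show "\<not> (ex e \<in> Zn \<and> ey e \<in> Zn)" using ZnT[of "ex e"] ZnT[of "ey e"] unfolding mk_def by linarith }
      qed
      define bag where "bag = {x \<in> verts G. fst x = \<zeta>}"
      have Z3: "\<exists>z\<in>bag. z \<in> e" if e: "e \<in> edges G" and t: "touch Zn e" and mk: "\<kappa> \<le> mk e" for e
      proof -
        have gen: "x \<in> bag \<or> y \<in> bag" if xy: "x \<in> verts G" "y \<in> verts G" "fst x = fst y \<or> {fst x, fst y} \<in> edges T"
          "\<kappa> \<le> max (key (fst x)) (key (fst y))" "x \<in> Zn" for x y
        proof -
          consider "fst x \<in> R" "rho T R (fst x) = \<zeta>" | "fst x = \<tau>" "\<zeta> = \<tau>" using xy(5) Zn_def by auto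
          then show ?thesis
          proof cases
            case 1
            then have "key (fst x) < \<kappa>" using R_def by simp
            then have kb: "\<kappa> \<le> key (fst y)" using xy(4) by simp
            then have bn: "fst y \<notin> R" using R_def by simp
            then have ne: "fst x \<noteq> fst y" using 1 by auto
            then have E: "{fst x, fst y} \<in> edges T" using xy(3) by simp
            have "rho T R (fst x) = fst y" using rii[OF 1(1) _ E _ bn] gvert xy(1,2) by simp
            then show ?thesis using 1 xy(2) bag_def by simp
          next
            case 2 then show ?thesis using xy(1) bag_def by simp
          qed
        qed
        have "ex e \<in> Zn \<or> ey e \<in> Zn" using t touch_def by simp
        then have "ex e \<in> bag \<or> ey e \<in> bag"
          using gen[OF endpoints_rel(1,2,3)[OF e]] gen[OF endpoints_rel(2,1,4)[OF e]] mk unfolding mk_def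
          by (auto simp: max.commute)
        then show ?thesis using in_edge_iff[OF e] by blast
      qed
      have cbag: "card bag \<le> k"
      proof -
        have "bag \<subseteq> (\<lambda>i. (\<zeta>, i)) ` {..<k}" unfolding bag_def using gvert by force
        then have "card bag \<le> card ((\<lambda>i. (\<zeta>, i)) ` {..<k})" by (intro card_mono) auto
        also have "\<dots> \<le> k" using card_image_le[of "{..<k}" "\<lambda>i. (\<zeta>, i)"] by simp
        finally show ?thesis .
      qed
      define S where "S = {e\<in>edges G. touch Zn e}"
      define Sn where "Sn = {e\<in>S. \<kappa> \<le> mk e}"
      have fS: "finite S" using finite_touch S_def by simp
      have cSn: "card Sn \<le> k * \<Delta>"
      proof -
        have sub: "Sn \<subseteq> (\<Union>z\<in>bag. {e\<in>edges G. z \<in> e})" using Z3 unfolding Sn_def S_def by blast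
        have fb: "finite bag" using finite_V bag_def by simp
        have fU: "finite (\<Union>z\<in>bag. {e\<in>edges G. z \<in> e})"
          by (rule finite_subset[OF _ finite_E]) blast
        have "card Sn \<le> card (\<Union>z\<in>bag. {e\<in>edges G. z \<in> e})" by (rule card_mono[OF fU sub])
        also have "\<dots> \<le> (\<Sum>z\<in>bag. card {e\<in>edges G. z \<in> e})" by (rule card_UN_le[OF fb])
        also have "\<dots> \<le> (\<Sum>z\<in>bag. \<Delta>)" using degE bag_def by (intro sum_mono) auto
        also have "\<dots> = card bag * \<Delta>" by simp
        also have "\<dots> \<le> k * \<Delta>" using cbag by simp
        finally show ?thesis .
      qed
      have each: "M * cI s e \<le> (if \<kappa> \<le> mk e then M * s else s)" if e: "e \<in> edges G" for e
      proof (cases "\<kappa> \<le> mk e")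
        case True then show ?thesis using cI_le[of s e] by simp
      next
        case False
        then have "L e \<le> s" using eshort[OF e] by simp
        then have "cI s e \<le> L e" unfolding cI_def by simp
        then have "M * cI s e \<le> M * L e" by simp
        also have "\<dots> = M ^ Suc (Suc (mk e))" using L_eq[OF e] by simp
        also have "\<dots> \<le> M ^ Suc \<kappa>" using False mono_pow[of "Suc (mk e)" \<kappa>] by simp
        also have "\<dots> \<le> s" using \<tau>s .
        finally show ?thesis using False by simp
      qed
      have "M * (\<Sum>e\<in>S. cI s e) = (\<Sum>e\<in>S. M * cI s e)" by (simp add: sum_distrib_left)
      also have "\<dots> \<le> (\<Sum>e\<in>S. (if \<kappa> \<le> mk e then M * s else s))" using each S_def by (intro sum_mono) auto
      also have "\<dots> \<le> (\<Sum>e\<in>S. (s + (if \<kappa> \<le> mk e then M * s else 0)))" by (intro sum_mono) auto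
      also have "\<dots> = card S * s + (\<Sum>e\<in>S. (if \<kappa> \<le> mk e then M * s else 0))" by (simp add: sum.distrib)
      also have "(\<Sum>e\<in>S. (if \<kappa> \<le> mk e then M * s else 0)) = card Sn * (M * s)"
        using fS unfolding Sn_def by (simp add: sum.If_cases Int_def)
      finally have sumb: "M * (\<Sum>e\<in>S. cI s e) \<le> card S * s + card Sn * (M * s)" .
      have "card S \<le> card (edges G)" using finite_E S_def by (intro card_mono) auto
      then have a: "card S * s \<le> card (edges G) * s" by (rule mult_right_mono) simp
      have b: "card Sn * (M * s) \<le> (k * \<Delta>) * (M * s)" by (rule mult_right_mono[OF cSn]) simp
      have "M * (\<Sum>e\<in>S. cI s e) \<le> card S * s + card Sn * (M * s)" by (rule sumb)
      also have "\<dots> \<le> card (edges G) * s + (k * \<Delta>) * (M * s)" using a b by (rule add_mono)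
      also have "\<dots> = card (edges G) * s + M * (k * \<Delta>) * s" by (simp add: algebra_simps)
      finally have sumb2: "M * (\<Sum>e\<in>S. cI s e) \<le> card (edges G) * s + M * (k * \<Delta>) * s" .
      have "card Zn \<le> card (verts G)" using finite_V Zn_def by (intro card_mono) auto
      then have c: "M * card Zn \<le> M * card (verts G)" by simp
      have "M * Cnt Zn s = M * card Zn + M * (\<Sum>e\<in>S. cI s e)" unfolding Cnt_def S_def by (simp add: algebra_simps)
      also have "\<dots> \<le> M * card (verts G) + (card (edges G) * s + M * (k * \<Delta>) * s)" using c sumb2 by (rule add_mono)
      finally have "M * Cnt Zn s \<le> M * card (verts G) + card (edges G) * s + M * (k * \<Delta>) * s" by simp
      then show ?thesis using zok uZ sM by blast
    qed
  qed
qed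

end

lemma key_exists:
  assumes tr: "tree T"
  shows "\<exists>r0 (dT::'a \<Rightarrow> nat) (key::'a \<Rightarrow> nat). r0 \<in> verts T \<and> inj_on key (verts T) \<and>
    (\<forall>a\<in>verts T. a \<noteq> r0 \<longrightarrow> (\<exists>b\<in>verts T. {a,b} \<in> edges T \<and> dT b < dT a \<and> key a < key b))"
proof -
  have cg: "connected_graph T" and ugT: "ugraph T" using tr unfolding tree_def by auto
  obtain r0 where r0: "r0 \<in> verts T" using cg unfolding connected_graph_def by blast
  define dT where "dT a = (LEAST d. dist_le T r0 a d)" for a
  have dT_ok: "dist_le T r0 a (dT a)" if a: "a \<in> verts T" for a
  proof -
    obtain xs where xs: "walk T xs" "hd xs = r0" "last xs = a" using cg r0 a unfolding connected_graph_def by blast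
    then have "dist_le T r0 a (length xs)" unfolding dist_le_def by auto
    then show ?thesis unfolding dT_def by (rule LeastI)
  qed
  have pred: "\<exists>b\<in>verts T. {a,b} \<in> edges T \<and> dT b < dT a" if a: "a \<in> verts T" "a \<noteq> r0" for a
  proof -
    obtain xs where xs: "walk T xs" "hd xs = r0" "last xs = a" "length xs \<le> Suc (dT a)"
      using dT_ok[OF a(1)] unfolding dist_le_def by blast
    have ne: "xs \<noteq> []" using xs(1) walk_nonempty by blast
    define ys where "ys = butlast xs"
    have xs_eq: "xs = ys @ [a]" using append_butlast_last_id[OF ne] xs(3) ys_def by simp
    have ys_ne: "ys \<noteq> []"
    proof
      assume "ys = []"
      then have "xs = [a]" using xs_eq by simp
      then show False using xs(2) a(2) by simp
    qed
    have w: "walk T ys" "{last ys, a} \<in> edges T"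
      using xs(1) walk_append[OF ys_ne, of "[a]" T] xs_eq by auto
    have "hd ys = r0" using xs(2) xs_eq ys_ne by simp
    moreover have "length ys \<le> Suc (dT a - 1)" using xs(4) xs_eq ys_ne by (cases ys) auto
    ultimately have "dist_le T r0 (last ys) (dT a - 1)" unfolding dist_le_def using w(1) by blast
    then have "dT (last ys) \<le> dT a - 1" unfolding dT_def by (rule Least_le)
    moreover have "dT a \<ge> 1" using xs(4) xs_eq ys_ne by (cases ys) auto
    ultimately have "dT (last ys) < dT a" by simp
    moreover have "last ys \<in> verts T" using w(1) ys_ne walk_set by fastforce
    ultimately show ?thesis using w(2) by (auto simp: insert_commute)
  qed
  have fT: "finite (verts T)" using ugT unfolding ugraph_def by blast
  obtain idx :: "'a \<Rightarrow> nat" and n where idx: "idx ` verts T = {i. i < n}" "inj_on idx (verts T)"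
    using finite_imp_inj_to_nat_seg[OF fT] by blast
  have idx_lt: "idx a < n" if "a \<in> verts T" for a using idx(1) that by blast
  define D where "D = Max (dT ` verts T)"
  have dD: "dT a \<le> D" if "a \<in> verts T" for a using fT that unfolding D_def by simp
  define key where "key a = (D - dT a) * n + idx a" for a
  have inj: "inj_on key (verts T)"
  proof (rule inj_onI)
    fix a b assume a: "a \<in> verts T" and b: "b \<in> verts T" and eq: "key a = key b"
    have "key a mod n = idx a" "key b mod n = idx b" using idx_lt a b unfolding key_def by simp_all
    then have "idx a = idx b" using eq by simp
    then show "a = b" using idx(2) a b inj_on_eq_iff by metis
  qed
  have step: "key a < key b" if "a \<in> verts T" "b \<in> verts T" "dT b < dT a" for a b
  proof -
    have "D - dT a + 1 \<le> D - dT b" using dD[OF that(1)] that(3) by simp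
    then have "(D - dT a + 1) * n \<le> (D - dT b) * n" by (rule mult_right_mono) simp
    then have "(D - dT a) * n + n \<le> key b" unfolding key_def by (simp add: algebra_simps)
    then show ?thesis using idx_lt[OF that(1)] unfolding key_def by simp
  qed
  show ?thesis
    using r0 inj pred step by (intro exI[of _ r0] exI[of _ dT] exI[of _ key]) fastforce
qed

lemma arith_core:
  fixes C n m' M k \<Delta> s :: nat and \<epsilon> :: real
  assumes e: "0 < \<epsilon>" and Mb: "4 * real (n + m') \<le> \<epsilon> * real M" and M0: "0 < M"
    and Ms: "M \<le> s" and h: "M * C \<le> M * n + m' * s + M * (k * \<Delta>) * s"
  shows "real C \<le> real (k * \<Delta>) * real s + \<epsilon> * real s / 2"
proof -
  have h': "real M * real C \<le> real M * real n + real m' * real s + real M * real (k * \<Delta>) * real s"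
    using h by (metis of_nat_add of_nat_le_iff of_nat_mult)
  have r1: "4 * real n \<le> \<epsilon> * real s"
  proof -
    have "4 * real n \<le> \<epsilon> * real M" using Mb by simp
    also have "\<dots> \<le> \<epsilon> * real s" using Ms e by (intro mult_left_mono) auto
    finally show ?thesis .
  qed
  have r2: "4 * real m' * real s \<le> \<epsilon> * real M * real s"
  proof -
    have "4 * real m' \<le> \<epsilon> * real M" using Mb by simp
    then show ?thesis by (intro mult_right_mono) auto
  qed
  have "real M * real C \<le> real M * (real (k * \<Delta>) * real s + \<epsilon> * real s / 2)"
  proof -
    have a: "real M * real n \<le> real M * (\<epsilon> * real s / 4)" using r1 by (intro mult_left_mono) auto
    have "real M * real C \<le> real M * (\<epsilon> * real s / 4) + \<epsilon> * real M * real s / 4 + real M * real (k * \<Delta>) * real s"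
      using h' a r2 by linarith
    also have "\<dots> = real M * (real (k * \<Delta>) * real s + \<epsilon> * real s / 2)" by (simp add: algebra_simps)
    finally show ?thesis .
  qed
  then show ?thesis using M0 by (simp add: mult_le_cancel_left_pos)
qed

lemma arithA:
  fixes C n m' M k \<Delta> r :: nat and \<epsilon> :: real
  assumes k: "1 \<le> k" and e: "0 < \<epsilon>" and Mb: "4 * real (n + m') \<le> \<epsilon> * real M" and M0: "0 < M"
    and h: "C \<le> 1 + \<Delta> * r \<or> (M \<le> r \<and> M * C \<le> M * n + m' * r + M * (k * \<Delta>) * r)"
  shows "real C \<le> (real k * real \<Delta> + \<epsilon>) * real r + 1"
  using h
proof
  assume "C \<le> 1 + \<Delta> * r"
  then have "real C \<le> 1 + real \<Delta> * real r" by (metis of_nat_1 of_nat_add of_nat_le_iff of_nat_mult)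
  moreover have "real \<Delta> \<le> real k * real \<Delta>" using mult_right_mono[of 1 "real k" "real \<Delta>"] k by simp
  then have "real \<Delta> * real r \<le> real k * real \<Delta> * real r" by (intro mult_right_mono) auto
  moreover have "0 \<le> \<epsilon> * real r" using e by simp
  ultimately show ?thesis by (simp add: algebra_simps)
next
  assume "M \<le> r \<and> M * C \<le> M * n + m' * r + M * (k * \<Delta>) * r"
  then have "real C \<le> real (k * \<Delta>) * real r + \<epsilon> * real r / 2" using arith_core[OF e Mb M0] by blast
  moreover have "0 \<le> \<epsilon> * real r" using e by simp
  ultimately show ?thesis by (simp add: algebra_simps)
qed

lemma arithE:
  fixes c C s r n m' M k \<Delta> :: nat and \<epsilon> :: real
  assumes k: "1 \<le> k" and e: "0 < \<epsilon>" and Mb: "4 * real (n + m') \<le> \<epsilon> * real M" and M0: "0 < M"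
    and cC: "c + s + 1 \<le> C" and sr: "s \<le> r"
    and h: "C \<le> 1 + \<Delta> * s \<or> (M \<le> s \<and> M * C \<le> M * n + m' * s + M * (k * \<Delta>) * s)"
  shows "real c \<le> (real (k * \<Delta>) - 1) * real s + (if M \<le> r then \<epsilon> * real r / 2 else 0)"
proof -
  have cC': "real c + real s + 1 \<le> real C" using cC by (metis of_nat_1 of_nat_add of_nat_le_iff)
  have E0: "0 \<le> (if M \<le> r then \<epsilon> * real r / 2 else 0)" using e by simp
  have kd: "real \<Delta> \<le> real (k * \<Delta>)" using mult_right_mono[of 1 "real k" "real \<Delta>"] k by simp
  from h show ?thesis
  proof
    assume "C \<le> 1 + \<Delta> * s"
    then have "real C \<le> 1 + real \<Delta> * real s" by (metis of_nat_1 of_nat_add of_nat_le_iff of_nat_mult)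
    moreover have "real \<Delta> * real s \<le> real (k * \<Delta>) * real s" using kd by (intro mult_right_mono) auto
    ultimately have "real c \<le> (real (k * \<Delta>) - 1) * real s" using cC' by (simp add: algebra_simps)
    then show ?thesis using E0 by linarith
  next
    assume a: "M \<le> s \<and> M * C \<le> M * n + m' * s + M * (k * \<Delta>) * s"
    then have "real C \<le> real (k * \<Delta>) * real s + \<epsilon> * real s / 2" using arith_core[OF e Mb M0] by blast
    moreover have "\<epsilon> * real s / 2 \<le> \<epsilon> * real r / 2" using sr e by (simp add: mult_left_mono)
    moreover have "M \<le> r" using a sr by simp
    ultimately show ?thesis using cC' by (simp add: algebra_simps)
  qed
qed

lemma arithB:
  fixes p q r B :: nat and cu cv E \<epsilon> tot :: real
  assumes B2: "2 \<le> B" and pq: "r < p + q" and E0: "0 \<le> E"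
    and tot: "tot \<le> real (min p r) + real (min q r) + 1 + (if p \<le> r then cu else 0) + (if q \<le> r then cv else 0)"
    and hu: "p \<le> r \<Longrightarrow> cu \<le> (real B - 1) * real (r - p) + E"
    and hv: "q \<le> r \<Longrightarrow> cv \<le> (real B - 1) * real (r - q) + E"
    and E: "2 * E \<le> \<epsilon> * real r"
  shows "tot \<le> (real B + \<epsilon>) * real r + 1"
proof -
  define a where "a = real (min p r)"
  define b where "b = real (min q r)"
  have U: "(if p \<le> r then cu else 0) \<le> (real B - 1) * (real r - a) + E"
  proof (cases "p \<le> r")
    case True then show ?thesis using hu a_def by (simp add: of_nat_diff)
  next
    case False then show ?thesis using E0 a_def by simp
  qed
  have V: "(if q \<le> r then cv else 0) \<le> (real B - 1) * (real r - b) + E"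
  proof (cases "q \<le> r")
    case True then show ?thesis using hv b_def by (simp add: of_nat_diff)
  next
    case False then show ?thesis using E0 b_def by simp
  qed
  have ab: "real r \<le> a + b" using pq unfolding a_def b_def by (simp add: min_def)
  have B2': "0 \<le> real B - 2" using B2 by simp
  have "(real B - 2) * real r \<le> (real B - 2) * (a + b)" using ab B2' by (rule mult_left_mono)
  moreover have "a + b + (real B - 1) * (real r - a) + (real B - 1) * (real r - b)
      = 2 * (real B - 1) * real r - (real B - 2) * (a + b)" by (simp add: algebra_simps)
  ultimately have "a + b + (real B - 1) * (real r - a) + (real B - 1) * (real r - b) \<le> real B * real r"
    by (simp add: algebra_simps)
  then show ?thesis using tot U V E unfolding a_def[symmetric] b_def[symmetric] by (simp add: algebra_simps)
qed

context tsd begin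

lemma center_bound:
  assumes c: "c \<in> verts H" and r: "0 < r" and B2: "2 \<le> k * \<Delta>" and k1: "1 \<le> k" and e: "0 < \<epsilon>"
    and Mb: "4 * real (card (verts G) + card (edges G)) \<le> \<epsilon> * real M"
  shows "\<exists>F. Lip F \<and> F c = 0 \<and> real (card {x\<in>verts H. F x \<le> r}) \<le> (real k * real \<Delta> + \<epsilon>) * real r + 1"
proof -
  have M0: "0 < M" using M2 by simp
  have zb: "real (card {x\<in>verts H. FZ Zn r x \<le> r}) \<le> (real k * real \<Delta> + \<epsilon>) * real r + 1"
    if z: "zoneok Zn r" and h: "Cnt Zn r \<le> 1 + \<Delta> * r \<or> (M \<le> r \<and> M * Cnt Zn r \<le> M * card (verts G) + card (edges G) * r + M * (k * \<Delta>) * r)"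
    for Zn
  proof -
    have "card {x\<in>verts H. FZ Zn r x \<le> r} \<le> Cnt Zn r" by (rule zone_card[OF z])
    then have "real (card {x\<in>verts H. FZ Zn r x \<le> r}) \<le> real (Cnt Zn r)" by simp
    also have "\<dots> \<le> (real k * real \<Delta> + \<epsilon>) * real r + 1" by (rule arithA[OF k1 e Mb M0 h])
    finally show ?thesis .
  qed
  from c consider w where "w \<in> verts G" "c = Inl w" | e0 j where "e0 \<in> edges G" "0 < j" "j < L e0" "c = pv e0 j"
    unfolding verts_H by blast
  then show ?thesis
  proof cases
    case (1 w)
    obtain Zn where Zn: "zoneok Zn r" "w \<in> Zn" "Cnt Zn r \<le> 1 + \<Delta> * r \<or> (M \<le> r \<and> M * Cnt Zn r \<le> M * card (verts G) + card (edges G) * r + M * (k * \<Delta>) * r)"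
      using zone_exists[OF 1(1)] by blast
    have "FZ Zn r c = 0" using 1(2) Zn(2) by (simp add: FZ_Inl)
    then show ?thesis using zone_Lip[OF Zn(1)] zb[OF Zn(1) Zn(3)] by blast
  next
    case (2 e0 j)
    note e0 = 2(1)
    show ?thesis
    proof (cases "L e0 \<le> r")
      case True
      obtain Zn where Zn: "zoneok Zn r" "ex e0 \<in> Zn" "Cnt Zn r \<le> 1 + \<Delta> * r \<or> (M \<le> r \<and> M * Cnt Zn r \<le> M * card (verts G) + card (edges G) * r + M * (k * \<Delta>) * r)"
        using zone_exists[OF ex_ey(3)[OF e0]] by blast
      have "FZ Zn r c = phiZ Zn r e0 j" using FZ_pv[OF Zn(1) e0] 2 by simp
      also have "\<dots> = 0" unfolding phiZ_def using True Zn(2) by simp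
      finally show ?thesis using zone_Lip[OF Zn(1)] zb[OF Zn(1) Zn(3)] by blast
    next
      case False
      then have rL: "r < L e0" by simp
      define su where "su = r - j"
      define sv where "sv = r - (L e0 - j)"
      obtain Zu where Zu: "zoneok Zu su" "ex e0 \<in> Zu" "Cnt Zu su \<le> 1 + \<Delta> * su \<or> (M \<le> su \<and> M * Cnt Zu su \<le> M * card (verts G) + card (edges G) * su + M * (k * \<Delta>) * su)"
        using zone_exists[OF ex_ey(3)[OF e0]] by blast
      obtain Zv where Zv: "zoneok Zv sv" "ey e0 \<in> Zv" "Cnt Zv sv \<le> 1 + \<Delta> * sv \<or> (M \<le> sv \<and> M * Cnt Zv sv \<le> M * card (verts G) + card (edges G) * sv + M * (k * \<Delta>) * sv)"
        using zone_exists[OF ex_ey(4)[OF e0]] by blast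
      obtain F where F: "Lip F" "F (pv e0 j) = 0"
        "card {x\<in>verts H. F x \<le> r} \<le> min j r + min (L e0 - j) r + 1
          + (if j \<le> r then card ({x\<in>verts H. FZ Zu su x \<le> su} - pset e0) else 0)
          + (if L e0 - j \<le> r then card ({x\<in>verts H. FZ Zv sv x \<le> sv} - pset e0) else 0)"
        using edge_center[OF e0 2(2) 2(3) rL, of Zu Zv] Zu(1,2) Zv(1,2) unfolding su_def sv_def by blast
      define E where "E = (if M \<le> r then \<epsilon> * real r / 2 else 0)"
      define cu where "cu = card ({x\<in>verts H. FZ Zu su x \<le> su} - pset e0)"
      define cv where "cv = card ({x\<in>verts H. FZ Zv sv x \<le> sv} - pset e0)"
      have hu: "real cu \<le> (real (k * \<Delta>) - 1) * real (r - j) + E"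
      proof -
        have "cu + su + 1 \<le> Cnt Zu su" unfolding cu_def
          using zone_card_excl[OF Zu(1) e0 _ Zu(2)] rL su_def by simp
        then show ?thesis using arithE[OF k1 e Mb M0 _ _ Zu(3)] unfolding E_def su_def by simp
      qed
      have hv: "real cv \<le> (real (k * \<Delta>) - 1) * real (r - (L e0 - j)) + E"
      proof -
        have "cv + sv + 1 \<le> Cnt Zv sv" unfolding cv_def
          using zone_card_excl[OF Zv(1) e0 _ Zv(2)] rL sv_def by simp
        then show ?thesis using arithE[OF k1 e Mb M0 _ _ Zv(3)] unfolding E_def sv_def by simp
      qed
      have tot: "real (card {x\<in>verts H. F x \<le> r}) \<le> real (min j r) + real (min (L e0 - j) r) + 1
          + (if j \<le> r then real cu else 0) + (if L e0 - j \<le> r then real cv else 0)"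
        using F(3) unfolding cu_def cv_def by (simp split: if_splits)
      have "real (card {x\<in>verts H. F x \<le> r}) \<le> (real (k * \<Delta>) + \<epsilon>) * real r + 1"
        by (rule arithB[OF B2 _ _ tot hu hv]) (use rL 2 e in \<open>auto simp: E_def\<close>)
      then show ?thesis using F(1,2) 2(4) by auto
    qed
  qed
qed

end

context sd begin

lemma growth_L1:
  assumes L1: "\<And>e. e \<in> edges G \<Longrightarrow> L e = 1" and d1: "\<And>v. v \<in> verts G \<Longrightarrow> card {e\<in>edges G. v \<in> e} \<le> 1"
    and r: "0 < r"
  shows "growth H r \<le> 2"
proof (rule growth_bound, intro ballI)
  fix c assume c: "c \<in> verts H"
  then obtain w where w: "w \<in> verts G" "c = Inl w"
    unfolding verts_H using L1 by fastforce
  define N where "N = {v. {w,v} \<in> edges G}"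
  define Zn where "Zn = insert w N"
  have Nv: "N \<subseteq> verts G"
  proof
    fix v assume "v \<in> N"
    then have e: "{w,v} \<in> edges G" using N_def by simp
    then have "v \<in> {ex {w,v}, ey {w,v}}" using ex_ey(1)[OF e] by blast
    then show "v \<in> verts G" using ex_ey(3,4)[OF e] by auto
  qed
  have fN: "finite N" using Nv finite_V finite_subset by blast
  have cN: "card N \<le> 1"
  proof -
    have inj: "inj_on (\<lambda>v. {w,v}) N" by (rule inj_onI) (auto simp: doubleton_eq_iff)
    have "(\<lambda>v. {w,v}) ` N \<subseteq> {e\<in>edges G. w \<in> e}" using N_def by auto
    then have "card ((\<lambda>v. {w,v}) ` N) \<le> card {e\<in>edges G. w \<in> e}" using finite_E by (intro card_mono) auto
    then show ?thesis using card_image[OF inj] d1[OF w(1)] by simp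
  qed
  have cZ: "card Zn \<le> 2" unfolding Zn_def using card_insert_le_m1[of 2 N w] fN cN by simp
  have clos: "y \<in> Zn" if e: "e \<in> edges G" and xy: "e = {x,y}" "x \<noteq> y" and x: "x \<in> Zn" for e x y
  proof (cases "x = w")
    case True then show ?thesis using e xy N_def Zn_def by simp
  next
    case False
    then have xw: "{w,x} \<in> edges G" using x N_def Zn_def by simp
    have xV: "x \<in> verts G" using x Nv w Zn_def by auto
    have "e \<in> {e\<in>edges G. x \<in> e}" "{w,x} \<in> {e\<in>edges G. x \<in> e}" using e xy xw by auto
    moreover have "finite {e\<in>edges G. x \<in> e}" using finite_E by simp
    ultimately have "e = {w,x}" using d1[OF xV] by (metis card_le_Suc0_iff_eq One_nat_def)
    then have "y = w" using xy by (auto simp: doubleton_eq_iff)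
    then show ?thesis using Zn_def by simp
  qed
  have zok: "zoneok Zn r" unfolding zoneok_def
  proof (intro conjI ballI impI)
    show "Zn \<subseteq> verts G" using Nv w Zn_def by auto
    fix e assume e: "e \<in> edges G"
    { assume "L e \<le> r"
      show "(ex e \<in> Zn) = (ey e \<in> Zn)"
        using clos[OF e ex_ey(1)[OF e] ex_ey(2)[OF e]] clos[OF e _ _, of "ey e" "ex e"] ex_ey(1,2)[OF e]
        by (metis insert_commute) }
    { assume "r < L e" then show "\<not> (ex e \<in> Zn \<and> ey e \<in> Zn)" using L1[OF e] r by simp }
  qed
  have "Cnt Zn r = card Zn" unfolding Cnt_def cI_def using L1 r by simp
  then have "card {x\<in>verts H. FZ Zn r x \<le> r} \<le> 2" using zone_card[OF zok] cZ by simp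
  moreover have "FZ Zn r c = 0" using w Zn_def by (simp add: FZ_Inl)
  ultimately show "\<exists>F. Lip F \<and> F c = 0 \<and> card {x\<in>verts H. F x \<le> r} \<le> 2" using zone_Lip[OF zok] by blast
qed

end

theorem lemma16:
  fixes k \<Delta> :: nat and \<epsilon> :: real
    and T :: "'a ugraph" and G :: "('a \<times> nat) ugraph"
  assumes "k > 0" and "\<Delta> > 0" and "\<epsilon> > 0"
    and "tree T"
    and "subgraph G (strong_product T (complete_graph k))"
    and "max_degree_le G \<Delta>"
  shows "\<exists>(H :: (('a \<times> nat) + nat) ugraph) \<phi>. subdivision H G \<phi> \<and>
           (\<forall>r::nat. r > 0 \<longrightarrow> real (growth H r) \<le> (real k * real \<Delta> + \<epsilon>) * real r + 1)"
proof -
  have ugG: "ugraph G" using assms(5) unfolding subgraph_def by blast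
  have fV: "finite (verts G)" using ugG unfolding ugraph_def by (elim conjE)
  have fE: "finite (edges G)"
  proof -
    have "edges G \<subseteq> Pow (verts G)"
    proof
      fix e assume e: "e \<in> edges G"
      obtain u v where "e = {u,v}" "u \<in> verts G" "v \<in> verts G" using ugG e unfolding ugraph_def by blast
      then show "e \<in> Pow (verts G)" by simp
    qed
    then show ?thesis using fV finite_subset by blast
  qed
  obtain eid :: "('a \<times> nat) set \<Rightarrow> nat" and m where eid: "eid ` edges G = {i. i < m}" "inj_on eid (edges G)"
    using finite_imp_inj_to_nat_seg[OF fE] by blast
  have eid_lt: "\<And>e. e \<in> edges G \<Longrightarrow> eid e < m" using eid(1) by blast
  have k1: "1 \<le> k" using assms(1) by simp
  show ?thesis
  proof (cases "k * \<Delta> = 1")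
    case True
    then have kk: "k = 1" and d1: "\<Delta> = 1" by auto
    interpret S1: sd G "\<lambda>_. 1" eid m
      by unfold_locales (auto simp: ugG eid_lt eid(2))
    have "\<forall>r::nat. r > 0 \<longrightarrow> real (growth S1.H r) \<le> (real k * real \<Delta> + \<epsilon>) * real r + 1"
    proof (intro allI impI)
      fix r :: nat assume r: "0 < r"
      have "growth S1.H r \<le> 2"
        by (rule S1.growth_L1) (use assms(6) d1 r in \<open>auto simp: max_degree_le_def\<close>)
      then have "real (growth S1.H r) \<le> 2" by simp
      also have "\<dots> \<le> (real k * real \<Delta> + \<epsilon>) * real r + 1"
      proof -
        have "1 \<le> real r" using r by simp
        then have "1 \<le> (1 + \<epsilon>) * real r" using assms(3)
          by (metis add_increasing2 less_eq_real_def mult_1 mult_right_mono order_trans zero_le_one)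
        then show ?thesis using kk d1 by simp
      qed
      finally show "real (growth S1.H r) \<le> (real k * real \<Delta> + \<epsilon>) * real r + 1" .
    qed
    then show ?thesis using S1.H_subdivision by blast
  next
    case False
    have B2: "2 \<le> k * \<Delta>" using False assms(1,2)
      by (metis One_nat_def less_2_cases_iff mult_eq_0_iff not_le nat_less_le)
    obtain r0 dT key where kk: "r0 \<in> verts T" "inj_on key (verts T)"
      "\<forall>a\<in>verts T. a \<noteq> r0 \<longrightarrow> (\<exists>b\<in>verts T. {a,b} \<in> edges T \<and> (dT::'a \<Rightarrow> nat) b < dT a \<and> (key::'a \<Rightarrow> nat) a < key b)"
      using key_exists[OF assms(4)] by blast
    define Q where "Q = 4 * real (card (verts G) + card (edges G)) / \<epsilon>"
    define M where "M = nat \<lceil>Q\<rceil> + 2"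
    have M2: "2 \<le> M" unfolding M_def by simp
    have Mb: "4 * real (card (verts G) + card (edges G)) \<le> \<epsilon> * real M"
    proof -
      have "Q \<le> real M" unfolding M_def by linarith
      then have "\<epsilon> * Q \<le> \<epsilon> * real M" using assms(3) by (intro mult_left_mono) auto
      moreover have "\<epsilon> * Q = 4 * real (card (verts G) + card (edges G))" unfolding Q_def using assms(3) by simp
      ultimately show ?thesis by simp
    qed
    define Lf where "Lf e = M ^ Suc (max (key (fst (sd.ex e))) (key (fst (sd.ey e))))" for e :: "('a \<times> nat) set"
    interpret S: tsd G Lf eid m T k \<Delta> M r0 key dT
    proof unfold_locales
      show "ugraph G" by (rule ugG)
      show "\<And>e. e \<in> edges G \<Longrightarrow> 1 \<le> Lf e" unfolding Lf_def using M2 by simp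
      show "inj_on eid (edges G)" by (rule eid(2))
      show "\<And>e. e \<in> edges G \<Longrightarrow> eid e < m" by (rule eid_lt)
      show "tree T" by (rule assms(4))
      show "subgraph G (strong_product T (complete_graph k))" by (rule assms(5))
      show "max_degree_le G \<Delta>" by (rule assms(6))
      show "2 \<le> M" by (rule M2)
      show "inj_on key (verts T)" by (rule kk(2))
      show "\<forall>a\<in>verts T. a \<noteq> r0 \<longrightarrow> (\<exists>b\<in>verts T. {a,b} \<in> edges T \<and> dT b < dT a \<and> key a < key b)" by (rule kk(3))
      show "r0 \<in> verts T" by (rule kk(1))
      show "\<And>e. e \<in> edges G \<Longrightarrow> Lf e = M ^ Suc (max (key (fst (sd.ex e))) (key (fst (sd.ey e))))"
        unfolding Lf_def by simp
    qed
    have "\<forall>r::nat. r > 0 \<longrightarrow> real (growth S.H r) \<le> (real k * real \<Delta> + \<epsilon>) * real r + 1"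
    proof (intro allI impI)
      fix r :: nat assume r: "0 < r"
      define y where "y = (real k * real \<Delta> + \<epsilon>) * real r + 1"
      have y0: "0 \<le> y" unfolding y_def using assms(3) by (simp add: add_nonneg_nonneg)
      have "growth S.H r \<le> nat \<lfloor>y\<rfloor>"
      proof (rule S.growth_bound, intro ballI)
        fix c assume c: "c \<in> verts S.H"
        obtain F where F: "S.Lip F" "F c = 0" "real (card {x\<in>verts S.H. F x \<le> r}) \<le> y"
          using S.center_bound[OF c r B2 k1 assms(3) Mb] unfolding y_def by blast
        then show "\<exists>F. S.Lip F \<and> F c = 0 \<and> card {x\<in>verts S.H. F x \<le> r} \<le> nat \<lfloor>y\<rfloor>"
          using le_nat_floor by blast
      qed
      then have "real (growth S.H r) \<le> real (nat \<lfloor>y\<rfloor>)" by simp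
      also have "\<dots> \<le> y" using of_nat_floor[OF y0] .
      finally show "real (growth S.H r) \<le> (real k * real \<Delta> + \<epsilon>) * real r + 1" unfolding y_def .
    qed
    then show ?thesis using S.H_subdivision by blast
  qed
qed

end
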